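(* Consider an $M\times M$ input-queued switch with arrival rate matrix $\lambda\in\mathbb R_+^{M\times M}$ with $\lambda>0$ componentwise and $\sum_j\lambda_{\hat\imath j}=1$, $\sum_i\lambda_{i\hat\jmath}=1$ for all $\hat\imath,\hat\jmath$. Then $\lambda$ satisfies the complete loading condition and $\Xi(\lambda)=\{r_{\hat\imath}:1\le\hat\imath\le M\}\cup\{c_{\hat\jmath}:1\le\hat\jmath\le M\}$, where $(r_{\hat\imath})_{ij}=1_{i=\hat\imath}$ and $(c_{\hat\jmath})_{ij}=1_{j=\hat\jmath}$. Let $W(q)=(\xi\cdot q)_{\xi\in\Xi(\lambda)}\in\mathbb R_+^{2M}$. Then: (i) if $w$ is in the relative interior of $\{W(q):q\in\mathbb R_+^{M\times M}\}$, then $w\in\{W(q):q\in\mathcal I(\alpha)\}$ for all sufficiently small $\alpha>0$; (ii) for $M=2$, the set $\{W(q):q\in\mathcal I(\alpha)\}$ is strictly increasing as $\alpha$ decreases, i.e. for $0<\alpha<\beta$ it is a strict superset of $\{W(q):q\in\mathcal I(\beta)\}$.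
   Context: Input-queued switch: $N=M^2$ queues indexed by $(i,j)$, schedule set $\mathcal S$ = all $M\times M$ permutation matrices; for matrices, $x\cdot y=\sum_{i,j}x_{ij}y_{ij}$. $\langle\mathcal S\rangle$ convex hull; $\Lambda=\{\lambda\ge0:\lambda\le\sigma$ for some $\sigma\in\langle\mathcal S\rangle\}$. $E$ = extreme points of $\{\xi\ge0:\max_\pi\xi\cdot\pi\le1\}$, $\mathcal S^*$ its maximal elements (componentwise order), $\Xi(\lambda)=\{\xi\in\mathcal S^*:\xi\cdot\lambda=1\}$. Complete loading: $\lambda\in\Lambda$ and $\mathbf 1/\max_{\pi}\mathbf 1\cdot\pi$ is in the convex hull of $\Xi(\lambda)$. MW-$\alpha$ corresponds to $f(x)=x^\alpha$; $L_\alpha(q)=\sum_{ij}q_{ij}^{1+\alpha}/(1+\alpha)$. The lifting map $\Delta_\alpha(q)$ is the unique minimizer of $L_\alpha(r)$ over $r\ge0$ subject to $\xi\cdot r\ge\xi\cdot q$ for all $\xi\in\Xi(\lambda)$ and $r_{ij}\le q_{ij}$ whenever $\lambda_{ij}=0$; $\mathcal I(\alpha)=\{q\in\mathbb R_+^{M\times M}:\Delta_\alpha(q)=q\}$ is the set of invariant states. *)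

theory Defs
  imports "HOL-Analysis.Analysis"
begin

text \<open>An M x M input-queued switch; M = CARD('n). Matrices are real^'n^'n.\<close>



definition mdot :: "real^'n::finite^'n \<Rightarrow> real^'n^'n \<Rightarrow> real" where
  "mdot x y = (\<Sum>i\<in>UNIV. \<Sum>j\<in>UNIV. x$i$j * y$i$j)"

definition nonneg_mat :: "real^'n::finite^'n \<Rightarrow> bool" where
  "nonneg_mat x \<longleftrightarrow> (\<forall>i j. 0 \<le> x$i$j)"

definition ones_mat :: "real^'n::finite^'n" where
  "ones_mat = (\<chi> i j. 1)"

definition sched :: "(real^'n::finite^'n) set" where
  "sched = {(\<chi> i j. if \<sigma> i = j then 1 else 0) | \<sigma>. \<sigma> permutes (UNIV :: 'n set)}"

definition capacity_region :: "(real^'n::finite^'n) set" where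
  "capacity_region = {l. nonneg_mat l \<and> (\<exists>\<sigma>\<in>convex hull sched. l \<le> \<sigma>)}"

definition dual_polytope :: "(real^'n::finite^'n) set" where
  "dual_polytope = {\<xi>. nonneg_mat \<xi> \<and> Max ((\<lambda>\<pi>. mdot \<xi> \<pi>) ` sched) \<le> 1}"

definition extE :: "(real^'n::finite^'n) set" where
  "extE = {\<xi>. \<xi> extreme_point_of dual_polytope}"

definition Sstar :: "(real^'n::finite^'n) set" where
  "Sstar = {\<xi> \<in> extE. \<not> (\<exists>\<xi>'\<in>extE. \<xi> \<le> \<xi>' \<and> \<xi> \<noteq> \<xi>')}"

definition Xi :: "real^'n::finite^'n \<Rightarrow> (real^'n^'n) set" where
  "Xi l = {\<xi> \<in> Sstar. mdot \<xi> l = 1}"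

definition complete_loading :: "real^'n::finite^'n \<Rightarrow> bool" where
  "complete_loading l \<longleftrightarrow> l \<in> capacity_region \<and>
     (1 / Max ((\<lambda>\<pi>. mdot ones_mat \<pi>) ` (sched :: (real^'n^'n) set))) *\<^sub>R ones_mat \<in> convex hull (Xi l)"

definition Lyap :: "real \<Rightarrow> real^'n::finite^'n \<Rightarrow> real" where
  "Lyap \<alpha> q = (\<Sum>i\<in>UNIV. \<Sum>j\<in>UNIV. q$i$j powr (1 + \<alpha>) / (1 + \<alpha>))"

definition lift_feasible :: "real^'n::finite^'n \<Rightarrow> real^'n^'n \<Rightarrow> (real^'n^'n) set" where
  "lift_feasible l q = {r. nonneg_mat r \<and> (\<forall>\<xi>\<in>Xi l. mdot \<xi> r \<ge> mdot \<xi> q)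
      \<and> (\<forall>i j. l$i$j = 0 \<longrightarrow> r$i$j \<le> q$i$j)}"

definition lift :: "real^'n::finite^'n \<Rightarrow> real \<Rightarrow> real^'n^'n \<Rightarrow> real^'n^'n" where
  "lift l \<alpha> q = (THE r. r \<in> lift_feasible l q \<and> (\<forall>r'\<in>lift_feasible l q. Lyap \<alpha> r \<le> Lyap \<alpha> r'))"

definition invariant_states :: "real^'n::finite^'n \<Rightarrow> real \<Rightarrow> (real^'n^'n) set" where
  "invariant_states l \<alpha> = {q. nonneg_mat q \<and> lift l \<alpha> q = q}"

definition row_vec :: "'n::finite \<Rightarrow> real^'n^'n" where
  "row_vec k = (\<chi> i j. if i = k then 1 else 0)"

definition col_vec :: "'n::finite \<Rightarrow> real^'n^'n" where
  "col_vec k = (\<chi> i j. if j = k then 1 else 0)"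

text \<open>W(q) = (xi . q) for xi in Xi(lambda) = {r_k} \<union> {c_k}, indexed by 'n + 'n
  (Inl k for r_k, Inr k for c_k).\<close>
definition Wmap :: "real^'n::finite^'n \<Rightarrow> real^('n + 'n)" where
  "Wmap q = (\<chi> k. case k of Inl i \<Rightarrow> mdot (row_vec i) q | Inr j \<Rightarrow> mdot (col_vec j) q)"

end

theory Submission
  imports Defs
begin



lemma mat_eqI: "(\<And>i j. x$i$j = y$i$j) \<Longrightarrow> x = (y::'a^'n::finite^'m::finite)"
  by (simp add: vec_eq_iff)

lemma hall:
  fixes A :: "'a \<Rightarrow> 'b set"
  assumes "finite I" "\<forall>i\<in>I. finite (A i)" "\<forall>S\<subseteq>I. card S \<le> card (\<Union>(A ` S))"
  shows "\<exists>f. inj_on f I \<and> (\<forall>i\<in>I. f i \<in> A i)"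
  using assms
proof (induction "card I" arbitrary: I A rule: less_induct)
  case less
  show ?case
  proof (cases "I = {}")
    case True then show ?thesis by auto
  next
    case Ine: False
    show ?thesis
    proof (cases "\<exists>S. S \<subseteq> I \<and> S \<noteq> {} \<and> S \<noteq> I \<and> card (\<Union>(A ` S)) = card S")
      case True
      then obtain S where S: "S \<subseteq> I" "S \<noteq> {}" "S \<noteq> I" "card (\<Union>(A ` S)) = card S" by blast
      have fS: "finite S" using S(1) less.prems(1) finite_subset by blast
      have "card S < card I" using S less.prems(1) by (meson psubsetI psubset_card_mono)
      then obtain f1 where f1: "inj_on f1 S" "\<forall>i\<in>S. f1 i \<in> A i"
        using less.hyps[of S A] fS S(1) less.prems by auto
      define B where "B = (\<lambda>i. A i - \<Union>(A ` S))"
      have cIS: "card (I - S) < card I"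
      proof -
        have "card S > 0" using fS S(2) by auto
        moreover have "card S \<le> card I" using S(1) less.prems(1) by (simp add: card_mono)
        ultimately show ?thesis using card_Diff_subset[OF fS S(1)] by linarith
      qed
      have hB: "\<forall>T\<subseteq>I - S. card T \<le> card (\<Union>(B ` T))"
      proof (intro allI impI)
        fix T assume T: "T \<subseteq> I - S"
        have fT: "finite T" using T less.prems(1) finite_subset by blast
        have eq: "\<Union>(B ` T) = \<Union>(A ` (T \<union> S)) - \<Union>(A ` S)" unfolding B_def by auto
        have fU: "finite (\<Union>(A ` (T \<union> S)))" using T S(1) less.prems(2) fT fS by auto
        have sub: "\<Union>(A ` S) \<subseteq> \<Union>(A ` (T \<union> S))" by auto
        have "T \<union> S \<subseteq> I" using T S(1) by auto
        then have "card (T \<union> S) \<le> card (\<Union>(A ` (T \<union> S)))" using less.prems(3) by blast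
        moreover have "card (T \<union> S) = card T + card S" using T fT fS by (subst card_Un_disjoint) auto
        moreover have "card (\<Union>(B ` T)) = card (\<Union>(A ` (T \<union> S))) - card (\<Union>(A ` S))"
          unfolding eq using fU sub by (simp add: card_Diff_subset finite_subset)
        ultimately show "card T \<le> card (\<Union>(B ` T))" using S(4) by linarith
      qed
      obtain f2 where f2: "inj_on f2 (I - S)" "\<forall>i\<in>I - S. f2 i \<in> B i"
        using less.hyps[of "I - S" B, OF cIS] hB less.prems by (auto simp: B_def)
      define f where "f = (\<lambda>i. if i \<in> S then f1 i else f2 i)"
      have "inj_on f I"
      proof (rule inj_onI)
        fix x y assume xy: "x \<in> I" "y \<in> I" "f x = f y"
        show "x = y"
        proof (cases "x \<in> S"; cases "y \<in> S")
          assume "x \<in> S" "y \<in> S" then show ?thesis using xy f1 by (auto simp: f_def inj_on_def)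
        next
          assume "x \<notin> S" "y \<notin> S" then show ?thesis using xy f2 by (auto simp: f_def inj_on_def)
        next
          assume a: "x \<in> S" "y \<notin> S"
          have "f x \<in> \<Union>(A ` S)" using a f1 by (auto simp: f_def)
          moreover have "f y \<notin> \<Union>(A ` S)" using a f2 xy(1,2) by (auto simp: f_def B_def)
          ultimately show ?thesis using xy by simp
        next
          assume a: "x \<notin> S" "y \<in> S"
          have "f y \<in> \<Union>(A ` S)" using a f1 by (auto simp: f_def)
          moreover have "f x \<notin> \<Union>(A ` S)" using a f2 xy(1,2) by (auto simp: f_def B_def)
          ultimately show ?thesis using xy by simp
        qed
      qed
      moreover have "\<forall>i\<in>I. f i \<in> A i" using f1 f2 by (auto simp: f_def B_def)
      ultimately show ?thesis by blast
    next
      case False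
      then have strict: "\<And>S. S \<subseteq> I \<Longrightarrow> S \<noteq> {} \<Longrightarrow> S \<noteq> I \<Longrightarrow> card S < card (\<Union>(A ` S))"
        using less.prems(3) by (metis le_neq_implies_less)
      obtain i0 where i0: "i0 \<in> I" using Ine by blast
      have "{i0} \<subseteq> I" using i0 by simp
      then have "card {i0} \<le> card (\<Union>(A ` {i0}))" using less.prems(3) by blast
      then have "card {i0} \<le> card (A i0)" by simp
      then have "A i0 \<noteq> {}" by auto
      then obtain x where x: "x \<in> A i0" by blast
      define B where "B = (\<lambda>i. A i - {x})"
      have cI: "card (I - {i0}) < card I" using i0 less.prems(1) by (meson card_Diff1_less)
      have hB: "\<forall>T\<subseteq>I - {i0}. card T \<le> card (\<Union>(B ` T))"
      proof (intro allI impI)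
        fix T assume T: "T \<subseteq> I - {i0}"
        show "card T \<le> card (\<Union>(B ` T))"
        proof (cases "T = {}")
          case True then show ?thesis by simp
        next
          case False
          have fT: "finite T" using T less.prems(1) finite_subset by blast
          have fU: "finite (\<Union>(A ` T))" using T less.prems(2) fT by auto
          have "card T < card (\<Union>(A ` T))" using strict[of T] T i0 False by auto
          moreover have "\<Union>(B ` T) = \<Union>(A ` T) - {x}" by (auto simp: B_def)
          then have "card (\<Union>(B ` T)) = card (\<Union>(A ` T) - {x})" by simp
          moreover have "card (\<Union>(A ` T)) \<le> card (\<Union>(A ` T) - {x}) + 1"
            using fU by (simp add: card_Diff_singleton_if) linarith
          ultimately show ?thesis by linarith
        qed
      qed
      obtain f2 where f2: "inj_on f2 (I - {i0})" "\<forall>i\<in>I - {i0}. f2 i \<in> B i"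
        using less.hyps[of "I - {i0}" B, OF cI] hB less.prems by (auto simp: B_def)
      define f where "f = f2(i0 := x)"
      have "inj_on f I"
      proof (rule inj_onI)
        fix a b assume ab: "a \<in> I" "b \<in> I" "f a = f b"
        show "a = b"
        proof (cases "a = i0"; cases "b = i0")
          assume "a \<noteq> i0" "b \<noteq> i0" then show ?thesis using ab f2(1) by (auto simp: f_def inj_on_def)
        next
          assume "a = i0" "b \<noteq> i0" then show ?thesis using ab f2(2) by (auto simp: f_def B_def)
        next
          assume "a \<noteq> i0" "b = i0" then show ?thesis using ab f2(2) by (auto simp: f_def B_def)
        qed simp
      qed
      moreover have "\<forall>i\<in>I. f i \<in> A i" using f2 x by (auto simp: f_def B_def)
      ultimately show ?thesis by blast
    qed
  qed
qed




definition pmat :: "('n::finite \<Rightarrow> 'n) \<Rightarrow> real^'n^'n" where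
  "pmat \<sigma> = (\<chi> i j. if \<sigma> i = j then 1 else 0)"

lemma sched_eq: "sched = pmat ` {\<sigma>. \<sigma> permutes (UNIV::'n::finite set)}"
  by (auto simp: sched_def pmat_def)

lemma finite_sched: "finite (sched :: (real^'n::finite^'n) set)"
  unfolding sched_eq by (simp add: finite_permutations)

lemma sched_ne: "(sched :: (real^'n::finite^'n) set) \<noteq> {}"
  unfolding sched_eq using permutes_id by blast

lemma mdot_pmat: "mdot x (pmat \<sigma>) = (\<Sum>i\<in>UNIV. x$i$(\<sigma> i))"
  unfolding mdot_def pmat_def by (simp add: if_distrib cong: if_cong)

lemma col_pmat: assumes "\<sigma> permutes UNIV" shows "(\<Sum>i\<in>UNIV. (pmat \<sigma>)$i$j) = 1"
proof -
  have "\<And>i. (\<sigma> i = j) = (i = inv \<sigma> j)" using assms by (metis permutes_inverses(1) permutes_inverses(2))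
  then show ?thesis unfolding pmat_def by simp
qed

lemma row_pmat: "(\<Sum>j\<in>UNIV. (pmat \<sigma>)$i$j) = 1"
  unfolding pmat_def by simp

lemma dstoch_perm:
  fixes D :: "real^'n::finite^'n"
  assumes nn: "nonneg_mat D" and rs: "\<And>i. (\<Sum>j\<in>UNIV. D$i$j) = s"
    and cs: "\<And>j. (\<Sum>i\<in>UNIV. D$i$j) = s" and sp: "s > 0"
  shows "\<exists>\<sigma>. \<sigma> permutes UNIV \<and> (\<forall>i. D$i$(\<sigma> i) > 0)"
proof -
  define A where "A = (\<lambda>i. {j. D$i$j > 0})"
  have hallc: "card S \<le> card (\<Union>(A ` S))" for S
  proof -
    define N where "N = \<Union>(A ` S)"
    have "real (card S) * s = (\<Sum>i\<in>S. \<Sum>j\<in>UNIV. D$i$j)" using rs by simp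
    also have "\<dots> = (\<Sum>i\<in>S. \<Sum>j\<in>N. D$i$j)"
    proof (rule sum.cong[OF refl])
      fix i assume i: "i \<in> S"
      show "(\<Sum>j\<in>UNIV. D$i$j) = (\<Sum>j\<in>N. D$i$j)"
        using i nn by (intro sum.mono_neutral_right) (auto simp: N_def A_def nonneg_mat_def less_le)
    qed
    also have "\<dots> = (\<Sum>j\<in>N. \<Sum>i\<in>S. D$i$j)" by (rule sum.swap)
    also have "\<dots> \<le> (\<Sum>j\<in>N. \<Sum>i\<in>UNIV. D$i$j)"
      by (rule sum_mono, rule sum_mono2) (use nn in \<open>auto simp: nonneg_mat_def\<close>)
    also have "\<dots> = real (card N) * s" using cs by simp
    finally have "real (card S) * s \<le> real (card N) * s" .
    then show "card S \<le> card (\<Union>(A ` S))" using sp unfolding N_def by simp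
  qed
  obtain f where f: "inj_on f UNIV" "\<forall>i\<in>UNIV. f i \<in> A i"
    using hall[of UNIV A] hallc by auto
  have "bij f" using f(1) by (simp add: bij_def finite_UNIV_inj_surj)
  then have "f permutes UNIV" by (intro bij_imp_permutes) auto
  then show ?thesis using f(2) by (auto simp: A_def)
qed

lemma birkhoff_aux:
  "\<forall>(D::real^'n::finite^'n) s. card {p. D$(fst p)$(snd p) \<noteq> 0} = n \<longrightarrow> nonneg_mat D \<longrightarrow>
     (\<forall>i. (\<Sum>j\<in>UNIV. D$i$j) = s) \<longrightarrow> (\<forall>j. (\<Sum>i\<in>UNIV. D$i$j) = s) \<longrightarrow> s > 0 \<longrightarrow>
     (\<exists>X\<in>convex hull sched. D = s *\<^sub>R X)"
proof (induction n rule: less_induct)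
  case (less n)
  show ?case
  proof (intro allI impI)
    fix D :: "real^'n^'n" and s :: real
    assume cn: "card {p. D$(fst p)$(snd p) \<noteq> 0} = n" and nn: "nonneg_mat D"
      and rs: "\<forall>i. (\<Sum>j\<in>UNIV. D$i$j) = s" and cs: "\<forall>j. (\<Sum>i\<in>UNIV. D$i$j) = s" and sp: "s > 0"
    obtain \<sigma> where \<sigma>: "\<sigma> permutes UNIV" "\<forall>i. D$i$(\<sigma> i) > 0"
      using dstoch_perm[OF nn] rs cs sp by blast
    define \<theta> where "\<theta> = Min ((\<lambda>i. D$i$(\<sigma> i)) ` UNIV)"
    have "\<theta> \<in> (\<lambda>i. D$i$(\<sigma> i)) ` UNIV" unfolding \<theta>_def by (rule Min_in) auto
    then obtain i0 where i0: "D$i0$(\<sigma> i0) = \<theta>" by auto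
    have \<theta>le: "\<And>i. \<theta> \<le> D$i$(\<sigma> i)" unfolding \<theta>_def by simp
    have \<theta>pos: "\<theta> > 0" using i0 \<sigma>(2) by metis
    have \<theta>s: "\<theta> \<le> s"
    proof -
      have "D$i0$(\<sigma> i0) \<le> (\<Sum>j\<in>UNIV. D$i0$j)"
        by (rule member_le_sum) (use nn in \<open>auto simp: nonneg_mat_def\<close>)
      then show ?thesis using i0 rs by simp
    qed
    define D' where "D' = D - \<theta> *\<^sub>R pmat \<sigma>"
    have D'e: "\<And>i j. D'$i$j = D$i$j - (if \<sigma> i = j then \<theta> else 0)"
      by (simp add: D'_def pmat_def)
    have nn': "nonneg_mat D'"
      unfolding nonneg_mat_def D'e using nn \<theta>le by (auto simp: nonneg_mat_def)
    have rs': "\<forall>i. (\<Sum>j\<in>UNIV. D'$i$j) = s - \<theta>"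
      using rs by (simp add: D'e sum_subtractf)
    have cs': "\<forall>j. (\<Sum>i\<in>UNIV. D'$i$j) = s - \<theta>"
    proof
      fix j
      have "(\<Sum>i\<in>UNIV. (if \<sigma> i = j then \<theta> else 0)) = \<theta> * (\<Sum>i\<in>UNIV. (pmat \<sigma>)$i$j)"
        by (simp add: pmat_def sum_distrib_left if_distrib cong: if_cong)
      then show "(\<Sum>i\<in>UNIV. D'$i$j) = s - \<theta>"
        using cs col_pmat[OF \<sigma>(1)] by (simp add: D'e sum_subtractf)
    qed
    show "\<exists>X\<in>convex hull sched. D = s *\<^sub>R X"
    proof (cases "s - \<theta> = 0")
      case True
      have z: "D' = 0"
      proof (rule mat_eqI)
        fix i j
        have "(\<Sum>j\<in>UNIV. D'$i$j) = 0" using rs' True by simp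
        then have "\<forall>j\<in>UNIV. D'$i$j = 0" using nn' by (subst sum_nonneg_eq_0_iff[symmetric]) (auto simp: nonneg_mat_def)
        then show "D'$i$j = 0$i$j" by simp
      qed
      have "D = s *\<^sub>R pmat \<sigma>" using z True unfolding D'_def by simp
      moreover have "pmat \<sigma> \<in> convex hull sched"
        using \<sigma>(1) by (auto simp: sched_eq intro: hull_inc)
      ultimately show ?thesis by blast
    next
      case False
      then have sp': "s - \<theta> > 0" using \<theta>s by simp
      have fin: "finite {p. D$(fst p)$(snd p) \<noteq> 0}" by simp
      have sub: "{p. D'$(fst p)$(snd p) \<noteq> 0} \<subset> {p. D$(fst p)$(snd p) \<noteq> 0}"
      proof
        show "{p. D'$(fst p)$(snd p) \<noteq> 0} \<subseteq> {p. D$(fst p)$(snd p) \<noteq> 0}"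
        proof clarsimp
          fix a b assume ab: "D'$a$b \<noteq> 0" "D$a$b = 0"
          show False
          proof (cases "\<sigma> a = b")
            case True then show ?thesis using \<theta>le[of a] \<theta>pos ab(2) by simp
          next
            case False then show ?thesis using ab by (simp add: D'e)
          qed
        qed
        have "(i0, \<sigma> i0) \<in> {p. D$(fst p)$(snd p) \<noteq> 0}" using \<sigma>(2)[rule_format, of i0] by simp
        moreover have "(i0, \<sigma> i0) \<notin> {p. D'$(fst p)$(snd p) \<noteq> 0}" using i0 by (simp add: D'e)
        ultimately show "{p. D'$(fst p)$(snd p) \<noteq> 0} \<noteq> {p. D$(fst p)$(snd p) \<noteq> 0}" by blast
      qed
      have "card {p. D'$(fst p)$(snd p) \<noteq> 0} < n" using psubset_card_mono[OF fin sub] cn by simp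
      then have "\<exists>X\<in>convex hull sched. D' = (s - \<theta>) *\<^sub>R X"
        using less.IH nn' rs' cs' sp' by presburger
      then obtain X' where X': "X' \<in> convex hull sched" "D' = (s - \<theta>) *\<^sub>R X'" by blast
      define X where "X = (\<theta> / s) *\<^sub>R pmat \<sigma> + ((s - \<theta>) / s) *\<^sub>R X'"
      have "pmat \<sigma> \<in> convex hull sched" using \<sigma>(1) by (auto simp: sched_eq intro: hull_inc)
      then have "X \<in> convex hull sched" unfolding X_def
        using X'(1) sp \<theta>pos \<theta>s
        by (intro convexD[OF convex_convex_hull]) (auto simp: diff_divide_distrib)
      moreover have "D = s *\<^sub>R X"
      proof (rule mat_eqI)
        fix i j
        have a: "D$i$j = D'$i$j + \<theta> * (pmat \<sigma>)$i$j" by (simp add: D'_def)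
        have b: "D'$i$j = (s - \<theta>) * X'$i$j" using X'(2) by simp
        have c: "(s *\<^sub>R X)$i$j = \<theta> * (pmat \<sigma>)$i$j + (s - \<theta>) * X'$i$j"
          using sp by (simp add: X_def field_simps)
        show "D$i$j = (s *\<^sub>R X)$i$j" unfolding c a b by simp
      qed
      ultimately show ?thesis by blast
    qed
  qed
qed

lemma birkhoff:
  fixes D :: "real^'n::finite^'n"
  assumes "nonneg_mat D" "\<And>i. (\<Sum>j\<in>UNIV. D$i$j) = 1" "\<And>j. (\<Sum>i\<in>UNIV. D$i$j) = 1"
  shows "D \<in> convex hull sched"
proof -
  have r: "\<forall>i. (\<Sum>j\<in>UNIV. D$i$j) = 1" "\<forall>j. (\<Sum>i\<in>UNIV. D$i$j) = 1" using assms by auto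
  have "\<exists>X\<in>convex hull sched. D = 1 *\<^sub>R X"
    using birkhoff_aux[rule_format, OF refl assms(1) assms(2) assms(3)] by simp
  then show ?thesis by simp
qed

lemma padding:
  fixes w :: "real^'n::finite^'n"
  assumes nn: "nonneg_mat w" and rs: "\<And>i. (\<Sum>j\<in>UNIV. w$i$j) \<le> 1" and cs: "\<And>j. (\<Sum>i\<in>UNIV. w$i$j) \<le> 1"
  shows "\<exists>D. nonneg_mat D \<and> (\<forall>i. (\<Sum>j\<in>UNIV. D$i$j) = 1) \<and> (\<forall>j. (\<Sum>i\<in>UNIV. D$i$j) = 1)
      \<and> (\<forall>i j. w$i$j \<le> D$i$j)"
proof -
  define r where "r = (\<lambda>i. 1 - (\<Sum>j\<in>UNIV. w$i$j))"
  define c where "c = (\<lambda>j. 1 - (\<Sum>i\<in>UNIV. w$i$j))"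
  define \<delta> where "\<delta> = (\<Sum>i\<in>UNIV. r i)"
  have r0: "\<And>i. r i \<ge> 0" and c0: "\<And>j. c j \<ge> 0" using rs cs by (auto simp: r_def c_def)
  have dc: "\<delta> = (\<Sum>j\<in>UNIV. c j)"
  proof -
    have "(\<Sum>i\<in>UNIV. \<Sum>j\<in>UNIV. w$i$j) = (\<Sum>j\<in>UNIV. \<Sum>i\<in>UNIV. w$i$j)" by (rule sum.swap)
    then show ?thesis unfolding \<delta>_def r_def c_def by (simp add: sum_subtractf)
  qed
  show ?thesis
  proof (cases "\<delta> = 0")
    case True
    then have "\<forall>i\<in>UNIV. r i = 0" using r0 unfolding \<delta>_def by (subst sum_nonneg_eq_0_iff[symmetric]) auto
    moreover have "\<forall>j\<in>UNIV. c j = 0" using True c0 unfolding dc by (subst sum_nonneg_eq_0_iff[symmetric]) auto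
    ultimately show ?thesis using nn by (intro exI[of _ w]) (auto simp: r_def c_def)
  next
    case False
    then have dp: "\<delta> > 0" using r0 unfolding \<delta>_def by (simp add: less_le sum_nonneg)
    define D where "D = (\<chi> i j. w$i$j + r i * c j / \<delta>)"
    have "nonneg_mat D" using nn r0 c0 dp by (auto simp: D_def nonneg_mat_def)
    moreover have "\<forall>i. (\<Sum>j\<in>UNIV. D$i$j) = 1"
    proof
      fix i
      have "(\<Sum>j\<in>UNIV. D$i$j) = (\<Sum>j\<in>UNIV. w$i$j) + r i * (\<Sum>j\<in>UNIV. c j) / \<delta>"
        by (simp add: D_def sum.distrib sum_distrib_left sum_divide_distrib)
      then show "(\<Sum>j\<in>UNIV. D$i$j) = 1" using dp dc by (simp add: r_def)
    qed
    moreover have "\<forall>j. (\<Sum>i\<in>UNIV. D$i$j) = 1"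
    proof
      fix j
      have "(\<Sum>i\<in>UNIV. D$i$j) = (\<Sum>i\<in>UNIV. w$i$j) + c j * (\<Sum>i\<in>UNIV. r i) / \<delta>"
        by (simp add: D_def sum.distrib sum_distrib_left sum_divide_distrib mult.commute)
      then show "(\<Sum>i\<in>UNIV. D$i$j) = 1" using dp by (simp add: c_def \<delta>_def)
    qed
    moreover have "\<forall>i j. w$i$j \<le> D$i$j" using r0 c0 dp by (simp add: D_def)
    ultimately show ?thesis by blast
  qed
qed




lemma mat_le_iff: "(x::real^'n::finite^'m::finite) \<le> y \<longleftrightarrow> (\<forall>i j. x$i$j \<le> y$i$j)"
  by (simp add: less_eq_vec_def)

lemma mdot_inner: "mdot x y = inner x y"
  by (simp add: mdot_def inner_vec_def)

lemma dual_iff: "\<xi> \<in> dual_polytope \<longleftrightarrow> nonneg_mat \<xi> \<and> (\<forall>\<sigma>. \<sigma> permutes UNIV \<longrightarrow> (\<Sum>i\<in>UNIV. \<xi>$i$(\<sigma> i)) \<le> 1)"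
proof -
  have "Max ((\<lambda>\<pi>. mdot \<xi> \<pi>) ` sched) \<le> 1 \<longleftrightarrow> (\<forall>\<pi>\<in>sched. mdot \<xi> \<pi> \<le> 1)"
    using finite_sched sched_ne by (subst Max_le_iff) auto
  also have "\<dots> \<longleftrightarrow> (\<forall>\<sigma>. \<sigma> permutes UNIV \<longrightarrow> (\<Sum>i\<in>UNIV. \<xi>$i$(\<sigma> i)) \<le> 1)"
    by (auto simp: sched_eq mdot_pmat)
  finally show ?thesis by (simp add: dual_polytope_def)
qed

lemma dual_entry_le1: assumes "\<xi> \<in> dual_polytope" shows "\<xi>$i$j \<le> 1"
proof -
  have p: "Transposition.transpose i j permutes UNIV" by (simp add: permutes_swap_id)
  have "\<xi>$i$(Transposition.transpose i j i) \<le> (\<Sum>i'\<in>UNIV. \<xi>$i'$(Transposition.transpose i j i'))"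
    by (rule member_le_sum) (use assms in \<open>auto simp: dual_iff nonneg_mat_def\<close>)
  also have "\<dots> \<le> 1" using assms p by (simp add: dual_iff)
  finally show ?thesis by simp
qed

lemma convex_dual: "convex dual_polytope"
  unfolding convex_def
proof (intro ballI allI impI)
  fix x y :: "real^'n^'n" and u v :: real
  assume x: "x \<in> dual_polytope" and y: "y \<in> dual_polytope" and uv: "0 \<le> u" "0 \<le> v" "u + v = 1"
  show "u *\<^sub>R x + v *\<^sub>R y \<in> dual_polytope"
    unfolding dual_iff
  proof (intro conjI allI impI)
    show "nonneg_mat (u *\<^sub>R x + v *\<^sub>R y)" using x y uv by (auto simp: dual_iff nonneg_mat_def)
    fix \<sigma> :: "'n \<Rightarrow> 'n" assume s: "\<sigma> permutes UNIV"
    have "(\<Sum>i\<in>UNIV. (u *\<^sub>R x + v *\<^sub>R y)$i$(\<sigma> i)) = u * (\<Sum>i\<in>UNIV. x$i$(\<sigma> i)) + v * (\<Sum>i\<in>UNIV. y$i$(\<sigma> i))"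
      by (simp add: sum.distrib sum_distrib_left)
    also have "\<dots> \<le> u * 1 + v * 1"
      using x y s uv by (intro add_mono mult_left_mono) (auto simp: dual_iff)
    finally show "(\<Sum>i\<in>UNIV. (u *\<^sub>R x + v *\<^sub>R y)$i$(\<sigma> i)) \<le> 1" using uv by simp
  qed
qed

lemma mdot_hull_le1:
  assumes "\<xi> \<in> dual_polytope" "D \<in> convex hull sched"
  shows "mdot \<xi> D \<le> 1"
proof -
  have "convex hull sched \<subseteq> {x. inner \<xi> x \<le> 1}"
  proof (rule hull_minimal)
    show "sched \<subseteq> {x. inner \<xi> x \<le> 1}"
      using assms(1) by (auto simp: sched_eq mdot_inner[symmetric] mdot_pmat dual_iff)
  qed (rule convex_halfspace_le)
  then show ?thesis using assms(2) by (auto simp: mdot_inner)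
qed

definition lineset :: "(real^'n::finite^'n) set" where
  "lineset = {x. (\<forall>i j. x$i$j = 0 \<or> x$i$j = 1) \<and>
     (\<exists>k. (\<forall>i j. x$i$j \<noteq> 0 \<longrightarrow> i = k) \<or> (\<forall>i j. x$i$j \<noteq> 0 \<longrightarrow> j = k))}"

lemma finite_lineset: "finite (lineset :: (real^'n::finite^'n) set)"
proof -
  have "lineset \<subseteq> range (\<lambda>f::'n \<Rightarrow> 'n \<Rightarrow> bool. (\<chi> i j. if f i j then 1 else 0) :: real^'n^'n)"
  proof
    fix x :: "real^'n^'n" assume "x \<in> lineset"
    then have "x = (\<chi> i j. if x$i$j = 1 then 1 else 0)"
      unfolding lineset_def by (intro mat_eqI) auto
    then show "x \<in> range (\<lambda>f::'n \<Rightarrow> 'n \<Rightarrow> bool. (\<chi> i j. if f i j then 1 else 0) :: real^'n^'n)"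
      by (intro image_eqI[where x="\<lambda>i j. x$i$j = 1"]) auto
  qed
  then show ?thesis by (rule finite_subset) simp
qed

lemma sum_single_support:
  fixes f :: "'a::finite \<Rightarrow> real"
  assumes "\<And>i. i \<noteq> k \<Longrightarrow> f i = 0"
  shows "(\<Sum>i\<in>UNIV. f i) = f k"
proof -
  have "(\<Sum>i\<in>UNIV. f i) = (\<Sum>i\<in>{k}. f i)"
    using assms by (intro sum.mono_neutral_right) auto
  then show ?thesis by simp
qed

lemma lineset_dual: "lineset \<subseteq> dual_polytope"
proof
  fix x :: "real^'n^'n" assume x: "x \<in> lineset"
  then have x01: "\<And>i j. x$i$j = 0 \<or> x$i$j = 1" by (auto simp: lineset_def)
  obtain k where k: "(\<forall>i j. x$i$j \<noteq> 0 \<longrightarrow> i = k) \<or> (\<forall>i j. x$i$j \<noteq> 0 \<longrightarrow> j = k)"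
    using x by (auto simp: lineset_def)
  have nn: "nonneg_mat x" using x01 by (auto simp: nonneg_mat_def) (metis order.refl zero_le_one)
  have le1: "\<And>i j. x$i$j \<le> 1" using x01 by (metis order.refl zero_le_one)
  show "x \<in> dual_polytope" unfolding dual_iff
  proof (intro conjI allI impI nn)
    fix \<sigma> :: "'n \<Rightarrow> 'n" assume s: "\<sigma> permutes UNIV"
    show "(\<Sum>i\<in>UNIV. x$i$(\<sigma> i)) \<le> 1"
      using k
    proof
      assume r: "\<forall>i j. x$i$j \<noteq> 0 \<longrightarrow> i = k"
      have "(\<Sum>i\<in>UNIV. x$i$(\<sigma> i)) = x$k$(\<sigma> k)" using r by (intro sum_single_support) auto
      then show ?thesis using le1 by simp
    next
      assume c: "\<forall>i j. x$i$j \<noteq> 0 \<longrightarrow> j = k"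
      have "(\<Sum>i\<in>UNIV. x$i$(\<sigma> i)) = x$(inv \<sigma> k)$(\<sigma> (inv \<sigma> k))"
      proof (intro sum_single_support)
        fix i assume "i \<noteq> inv \<sigma> k"
        then have "\<sigma> i \<noteq> k" using s by (metis permutes_inverses(2))
        then show "x$i$(\<sigma> i) = 0" using c by blast
      qed
      then show ?thesis using le1 by simp
    qed
  qed
qed

lemma dual_sub_hull: "dual_polytope \<subseteq> convex hull (lineset :: (real^'n::finite^'n) set)"
proof
  fix \<xi> :: "real^'n^'n" assume xi: "\<xi> \<in> dual_polytope"
  show "\<xi> \<in> convex hull lineset"
  proof (rule ccontr)
    assume nin: "\<xi> \<notin> convex hull lineset"
    have "closed (convex hull (lineset :: (real^'n^'n) set))"
      by (intro compact_imp_closed compact_convex_hull finite_imp_compact finite_lineset)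
    then obtain a b where ab: "inner a \<xi> < b" "\<forall>x\<in>convex hull lineset. b < inner a x"
      using separating_hyperplane_closed_point[OF convex_convex_hull _ nin] by blast
    define c where "c = - a"
    define w where "w = ((\<chi> i j. max (c$i$j) 0) :: real^'n^'n)"
    have cx: "\<And>x. x \<in> lineset \<Longrightarrow> inner c x < - b"
      using ab(2) hull_inc[of _ lineset convex] by (fastforce simp: c_def)
    have "0 \<in> (lineset :: (real^'n^'n) set)" by (simp add: lineset_def)
    then have bpos: "- b > 0" using cx[of 0] by simp
    have rowc: "(\<Sum>j\<in>UNIV. w$k$j) < - b" for k
    proof -
      define x where "x = ((\<chi> i j. if i = k \<and> c$i$j > 0 then 1 else 0) :: real^'n^'n)"
      have "x \<in> lineset" unfolding lineset_def
      proof (intro CollectI conjI)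
        show "\<forall>i j. x$i$j = 0 \<or> x$i$j = 1" by (simp add: x_def)
        show "\<exists>k. (\<forall>i j. x$i$j \<noteq> 0 \<longrightarrow> i = k) \<or> (\<forall>i j. x$i$j \<noteq> 0 \<longrightarrow> j = k)"
          by (rule exI[of _ k], rule disjI1) (simp add: x_def)
      qed
      moreover have "inner c x = (\<Sum>j\<in>UNIV. w$k$j)"
        unfolding mdot_inner[symmetric] mdot_def
      proof -
        have "(\<Sum>i\<in>UNIV. \<Sum>j\<in>UNIV. c$i$j * x$i$j) = (\<Sum>j\<in>UNIV. c$k$j * x$k$j)"
          by (rule sum_single_support) (simp add: x_def)
        also have "\<dots> = (\<Sum>j\<in>UNIV. w$k$j)" by (intro sum.cong) (auto simp: x_def w_def)
        finally show "(\<Sum>i\<in>UNIV. \<Sum>j\<in>UNIV. c$i$j * x$i$j) = (\<Sum>j\<in>UNIV. w$k$j)" .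
      qed
      ultimately show ?thesis using cx by metis
    qed
    have colc: "(\<Sum>i\<in>UNIV. w$i$k) < - b" for k
    proof -
      define x where "x = ((\<chi> i j. if j = k \<and> c$i$j > 0 then 1 else 0) :: real^'n^'n)"
      have "x \<in> lineset" unfolding lineset_def
      proof (intro CollectI conjI)
        show "\<forall>i j. x$i$j = 0 \<or> x$i$j = 1" by (simp add: x_def)
        show "\<exists>k. (\<forall>i j. x$i$j \<noteq> 0 \<longrightarrow> i = k) \<or> (\<forall>i j. x$i$j \<noteq> 0 \<longrightarrow> j = k)"
          by (rule exI[of _ k], rule disjI2) (simp add: x_def)
      qed
      moreover have "inner c x = (\<Sum>i\<in>UNIV. w$i$k)"
        unfolding mdot_inner[symmetric] mdot_def
      proof -
        have "(\<Sum>i\<in>UNIV. \<Sum>j\<in>UNIV. c$i$j * x$i$j) = (\<Sum>i\<in>UNIV. c$i$k * x$i$k)"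
          by (intro sum.cong refl sum_single_support) (simp add: x_def)
        also have "\<dots> = (\<Sum>i\<in>UNIV. w$i$k)" by (intro sum.cong) (auto simp: x_def w_def)
        finally show "(\<Sum>i\<in>UNIV. \<Sum>j\<in>UNIV. c$i$j * x$i$j) = (\<Sum>i\<in>UNIV. w$i$k)" .
      qed
      ultimately show ?thesis using cx by metis
    qed
    define B where "B = - b"
    have Bpos: "B > 0" using bpos by (simp add: B_def)
    define w' where "w' = (1 / B) *\<^sub>R w"
    have nnw': "nonneg_mat w'" using Bpos by (auto simp: w'_def w_def nonneg_mat_def)
    have rw': "(\<Sum>j\<in>UNIV. w'$i$j) \<le> 1" for i
    proof -
      have "(\<Sum>j\<in>UNIV. w'$i$j) = (\<Sum>j\<in>UNIV. w$i$j) / B" by (simp add: w'_def sum_divide_distrib)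
      then show ?thesis using rowc[of i] Bpos by (simp add: B_def[symmetric])
    qed
    have cw': "(\<Sum>i\<in>UNIV. w'$i$j) \<le> 1" for j
    proof -
      have "(\<Sum>i\<in>UNIV. w'$i$j) = (\<Sum>i\<in>UNIV. w$i$j) / B" by (simp add: w'_def sum_divide_distrib)
      then show ?thesis using colc[of j] Bpos by (simp add: B_def[symmetric])
    qed
    obtain D where D: "nonneg_mat D" "\<forall>i. (\<Sum>j\<in>UNIV. D$i$j) = 1" "\<forall>j. (\<Sum>i\<in>UNIV. D$i$j) = 1"
      "\<forall>i j. w'$i$j \<le> D$i$j"
      using padding[OF nnw' rw' cw'] by blast
    have "D \<in> convex hull sched" using birkhoff D by blast
    then have m1: "mdot \<xi> D \<le> 1" using mdot_hull_le1 xi by blast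
    have xnn: "nonneg_mat \<xi>" using xi by (simp add: dual_iff)
    have e1: "inner a \<xi> = - mdot \<xi> c" by (simp add: c_def mdot_inner inner_commute)
    have e2: "mdot \<xi> c \<le> mdot \<xi> w" unfolding mdot_def
      using xnn by (intro sum_mono mult_left_mono) (auto simp: w_def nonneg_mat_def)
    have e3: "mdot \<xi> w = B * mdot \<xi> w'"
      using Bpos by (simp add: mdot_def w'_def sum_distrib_left algebra_simps)
    have e4: "mdot \<xi> w' \<le> mdot \<xi> D" unfolding mdot_def
      using xnn D(4) by (intro sum_mono mult_left_mono) (auto simp: nonneg_mat_def)
    have "B * mdot \<xi> w' \<le> B * mdot \<xi> D" using e4 Bpos by simp
    moreover have "B * mdot \<xi> D \<le> B" using m1 Bpos by (simp add: mult_left_le)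
    ultimately show False using ab(1) e1 e2 e3 by (simp add: B_def)
  qed
qed




lemma dual_eq_hull: "dual_polytope = convex hull (lineset :: (real^'n::finite^'n) set)"
  by (intro antisym dual_sub_hull hull_minimal lineset_dual convex_dual)

lemma extE_lineset: fixes \<xi> :: "real^'n::finite^'n" assumes "\<xi> \<in> extE" shows "\<xi> \<in> lineset"
proof -
  have "\<xi> extreme_point_of (convex hull lineset)" using assms dual_eq_hull[where 'n='n] by (simp add: extE_def)
  then show ?thesis by (rule extreme_point_of_convex_hull)
qed

lemma row_vec_e: "row_vec k $ i $ j = (if i = k then 1 else 0)" by (simp add: row_vec_def)
lemma col_vec_e: "col_vec k $ i $ j = (if j = k then 1 else 0)" by (simp add: col_vec_def)

lemma mdot_row: "mdot (row_vec k) q = (\<Sum>j\<in>UNIV. q$k$j)"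
  unfolding mdot_def by (subst sum_single_support[where k=k]) (auto simp: row_vec_e)

lemma mdot_col: "mdot (col_vec k) q = (\<Sum>i\<in>UNIV. q$i$k)"
proof -
  have "\<And>i. (\<Sum>j\<in>UNIV. col_vec k$i$j * q$i$j) = q$i$k"
    by (subst sum_single_support[where k=k]) (auto simp: col_vec_e)
  then show ?thesis by (simp add: mdot_def)
qed

lemma row_dual: "row_vec k \<in> dual_polytope"
  unfolding dual_iff
proof (intro conjI allI impI)
  show "nonneg_mat (row_vec k)" by (simp add: nonneg_mat_def row_vec_e)
  fix \<sigma> :: "'a \<Rightarrow> 'a"
  have "(\<Sum>i\<in>UNIV. row_vec k $ i $ (\<sigma> i)) = row_vec k $ k $ (\<sigma> k)"
    by (rule sum_single_support) (simp add: row_vec_e)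
  then show "(\<Sum>i\<in>UNIV. row_vec k $ i $ (\<sigma> i)) \<le> 1" by (simp add: row_vec_e)
qed

lemma col_dual: "col_vec k \<in> dual_polytope"
  unfolding dual_iff
proof (intro conjI allI impI)
  show "nonneg_mat (col_vec k)" by (simp add: nonneg_mat_def col_vec_e)
  fix \<sigma> :: "'a \<Rightarrow> 'a" assume s: "\<sigma> permutes UNIV"
  have "(\<Sum>i\<in>UNIV. col_vec k $ i $ (\<sigma> i)) = (\<Sum>i\<in>UNIV. (pmat \<sigma>) $ i $ k)"
    by (simp add: col_vec_e pmat_def)
  then show "(\<Sum>i\<in>UNIV. col_vec k $ i $ (\<sigma> i)) \<le> 1" using col_pmat[OF s] by simp
qed

lemma seg1: assumes "0 < u" "u < 1" "a \<le> 1" "b \<le> (1::real)" "(1 - u) * a + u * b = 1"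
  shows "a = 1 \<and> b = 1"
proof -
  have p1: "(1 - u) * (1 - a) \<ge> 0" "u * (1 - b) \<ge> 0" using assms by auto
  have "(1 - u) * (1 - a) + u * (1 - b) = 0" using assms(5) by (simp add: algebra_simps)
  then have "(1 - u) * (1 - a) = 0" "u * (1 - b) = 0" using p1 by linarith+
  then show ?thesis using assms(1,2) by simp
qed

lemma seg0: assumes "0 < u" "u < 1" "0 \<le> a" "0 \<le> (b::real)" "(1 - u) * a + u * b = 0"
  shows "a = 0 \<and> b = 0"
proof -
  have p1: "(1 - u) * a \<ge> 0" "u * b \<ge> 0" using assms by auto
  then have "(1 - u) * a = 0" "u * b = 0" using assms(5) by linarith+
  then show ?thesis using assms(1,2) by simp
qed

lemma line_extreme:
  fixes g :: "real^'n::finite^'n"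
  assumes g: "\<And>i j. g$i$j = 0 \<or> g$i$j = 1" and gd: "g \<in> dual_polytope"
  shows "g extreme_point_of dual_polytope"
  unfolding extreme_point_of_def
proof (intro conjI ballI gd)
  fix a b :: "real^'n^'n" assume a: "a \<in> dual_polytope" and b: "b \<in> dual_polytope"
  show "g \<notin> open_segment a b"
  proof
    assume "g \<in> open_segment a b"
    then obtain u where u: "a \<noteq> b" "0 < u" "u < 1" "g = (1 - u) *\<^sub>R a + u *\<^sub>R b"
      by (auto simp: in_segment)
    have "a = b"
    proof (rule mat_eqI)
      fix i j
      have e: "(1 - u) * a$i$j + u * b$i$j = g$i$j" using u(4) by simp
      have nn: "0 \<le> a$i$j" "0 \<le> b$i$j" using a b by (auto simp: dual_iff nonneg_mat_def)
      have l1: "a$i$j \<le> 1" "b$i$j \<le> 1" using a b dual_entry_le1 by auto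
      show "a$i$j = b$i$j" using g[of i j]
      proof
        assume "g$i$j = 0" then show ?thesis using seg0[OF u(2,3) nn] e by simp
      next
        assume "g$i$j = 1" then show ?thesis using seg1[OF u(2,3) l1] e by simp
      qed
    qed
    then show False using u(1) by simp
  qed
qed

lemma row_ext: "row_vec k \<in> extE"
  unfolding extE_def by (auto intro!: line_extreme row_dual simp: row_vec_e)

lemma col_ext: "col_vec k \<in> extE"
  unfolding extE_def by (auto intro!: line_extreme col_dual simp: col_vec_e)

lemma sum_two_le:
  fixes f :: "'a::finite \<Rightarrow> real"
  assumes "i \<noteq> k" "\<And>x. 0 \<le> f x"
  shows "f i + f k \<le> (\<Sum>x\<in>UNIV. f x)"
proof -
  have "(\<Sum>x\<in>{i,k}. f x) \<le> (\<Sum>x\<in>UNIV. f x)" by (rule sum_mono2) (use assms in auto)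
  then show ?thesis using assms(1) by simp
qed

lemma row_max:
  assumes x: "x \<in> dual_polytope" and le: "row_vec k \<le> x"
  shows "x = row_vec k"
proof (rule mat_eqI)
  fix i j
  have le': "\<And>i j. row_vec k $ i $ j \<le> x$i$j" using le by (simp add: mat_le_iff)
  have nn: "\<And>i j. 0 \<le> x$i$j" using x by (auto simp: dual_iff nonneg_mat_def)
  show "x$i$j = row_vec k $ i $ j"
  proof (cases "i = k")
    case True
    then show ?thesis using le'[of i j] dual_entry_le1[OF x, of i j] by (simp add: row_vec_e)
  next
    case False
    show ?thesis
    proof (rule ccontr)
      assume "x$i$j \<noteq> row_vec k $ i $ j"
      then have pos: "x$i$j > 0" using nn[of i j] False by (simp add: row_vec_e)
      define \<sigma> where "\<sigma> = Transposition.transpose i j"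
      have s: "\<sigma> permutes UNIV" by (simp add: \<sigma>_def permutes_swap_id)
      have si: "\<sigma> i = j" by (simp add: \<sigma>_def)
      have xk: "x$k$(\<sigma> k) \<ge> 1" using le'[of k "\<sigma> k"] by (simp add: row_vec_e)
      have "x$i$(\<sigma> i) + x$k$(\<sigma> k) \<le> (\<Sum>l\<in>UNIV. x$l$(\<sigma> l))"
        using False nn by (intro sum_two_le) auto
      also have "\<dots> \<le> 1" using x s by (simp add: dual_iff)
      finally show False using pos xk si by simp
    qed
  qed
qed

lemma col_max:
  assumes x: "x \<in> dual_polytope" and le: "col_vec k \<le> x"
  shows "x = col_vec k"
proof (rule mat_eqI)
  fix i j
  have le': "\<And>i j. col_vec k $ i $ j \<le> x$i$j" using le by (simp add: mat_le_iff)
  have nn: "\<And>i j. 0 \<le> x$i$j" using x by (auto simp: dual_iff nonneg_mat_def)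
  show "x$i$j = col_vec k $ i $ j"
  proof (cases "j = k")
    case True
    then show ?thesis using le'[of i j] dual_entry_le1[OF x, of i j] by (simp add: col_vec_e)
  next
    case False
    show ?thesis
    proof (rule ccontr)
      assume "x$i$j \<noteq> col_vec k $ i $ j"
      then have pos: "x$i$j > 0" using nn[of i j] False by (simp add: col_vec_e)
      define \<sigma> where "\<sigma> = Transposition.transpose i j"
      have s: "\<sigma> permutes UNIV" by (simp add: \<sigma>_def permutes_swap_id)
      have si: "\<sigma> i = j" by (simp add: \<sigma>_def)
      define l where "l = inv \<sigma> k"
      have sl: "\<sigma> l = k" unfolding l_def using s by (meson permutes_inverses(1))
      have li: "i \<noteq> l" using si sl False by auto
      have xk: "x$l$(\<sigma> l) \<ge> 1" using le'[of l "\<sigma> l"] sl by (simp add: col_vec_e)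
      have "x$i$(\<sigma> i) + x$l$(\<sigma> l) \<le> (\<Sum>l\<in>UNIV. x$l$(\<sigma> l))"
        using li nn by (intro sum_two_le) auto
      also have "\<dots> \<le> 1" using x s by (simp add: dual_iff)
      finally show False using pos xk si by simp
    qed
  qed
qed

lemma extE_dual: "\<xi> \<in> extE \<Longrightarrow> \<xi> \<in> dual_polytope"
  by (simp add: extE_def extreme_point_of_def)

lemma Sstar_eq: "Sstar = range row_vec \<union> range (col_vec :: 'n::finite \<Rightarrow> real^'n^'n)"
proof
  show "Sstar \<subseteq> range (row_vec :: 'n \<Rightarrow> real^'n^'n) \<union> range col_vec"
  proof
    fix \<xi> :: "real^'n^'n" assume s: "\<xi> \<in> Sstar"
    then have e: "\<xi> \<in> extE" and nm: "\<And>\<xi>'. \<xi>' \<in> extE \<Longrightarrow> \<xi> \<le> \<xi>' \<Longrightarrow> \<xi> = \<xi>'"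
      by (auto simp: Sstar_def)
    have "\<xi> \<in> lineset" using extE_lineset[OF e] .
    then obtain k where x01: "\<And>i j. \<xi>$i$j = 0 \<or> \<xi>$i$j = 1"
      and k: "(\<forall>i j. \<xi>$i$j \<noteq> 0 \<longrightarrow> i = k) \<or> (\<forall>i j. \<xi>$i$j \<noteq> 0 \<longrightarrow> j = k)"
      by (auto simp: lineset_def)
    from k show "\<xi> \<in> range (row_vec :: 'n \<Rightarrow> real^'n^'n) \<union> range col_vec"
    proof
      assume r: "\<forall>i j. \<xi>$i$j \<noteq> 0 \<longrightarrow> i = k"
      have "\<xi> \<le> row_vec k" unfolding mat_le_iff row_vec_e
        using r x01 by (metis order.refl zero_le_one)
      then have "\<xi> = row_vec k" using nm row_ext by blast
      then show ?thesis by simp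
    next
      assume r: "\<forall>i j. \<xi>$i$j \<noteq> 0 \<longrightarrow> j = k"
      have "\<xi> \<le> col_vec k" unfolding mat_le_iff col_vec_e
        using r x01 by (metis order.refl zero_le_one)
      then have "\<xi> = col_vec k" using nm col_ext by blast
      then show ?thesis by simp
    qed
  qed
  show "range row_vec \<union> range col_vec \<subseteq> (Sstar :: (real^'n^'n) set)"
  proof
    fix \<xi> :: "real^'n^'n" assume "\<xi> \<in> range row_vec \<union> range col_vec"
    then show "\<xi> \<in> Sstar"
    proof
      assume "\<xi> \<in> range row_vec"
      then obtain k where k: "\<xi> = row_vec k" by blast
      show ?thesis unfolding Sstar_def k using row_ext row_max extE_dual by blast
    next
      assume "\<xi> \<in> range col_vec"
      then obtain k where k: "\<xi> = col_vec k" by blast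
      show ?thesis unfolding Sstar_def k using col_ext col_max extE_dual by blast
    qed
  qed
qed

lemma Xi_eq:
  fixes l :: "real^'n::finite^'n"
  assumes rows: "\<And>i. (\<Sum>j\<in>UNIV. l$i$j) = 1" and cols: "\<And>j. (\<Sum>i\<in>UNIV. l$i$j) = 1"
  shows "Xi l = range row_vec \<union> range col_vec"
  unfolding Xi_def Sstar_eq using rows cols by (auto simp: mdot_row mdot_col)

lemma complete_loading_thm:
  fixes l :: "real^'n::finite^'n"
  assumes pos: "\<And>i j. l$i$j > 0"
    and rows: "\<And>i. (\<Sum>j\<in>UNIV. l$i$j) = 1" and cols: "\<And>j. (\<Sum>i\<in>UNIV. l$i$j) = 1"
  shows "complete_loading l"
  unfolding complete_loading_def
proof
  have nn: "nonneg_mat l" using pos by (simp add: nonneg_mat_def less_imp_le)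
  show "l \<in> capacity_region"
    unfolding capacity_region_def using nn birkhoff[OF nn rows cols] by auto
  have mx: "Max ((\<lambda>\<pi>. mdot ones_mat \<pi>) ` (sched :: (real^'n^'n) set)) = real CARD('n)"
  proof -
    have val: "\<And>\<pi>. \<pi> \<in> (sched :: (real^'n^'n) set) \<Longrightarrow> mdot ones_mat \<pi> = real CARD('n)"
      by (auto simp: sched_eq mdot_pmat ones_mat_def)
    obtain \<pi>0 where p0: "\<pi>0 \<in> (sched :: (real^'n^'n) set)" using sched_ne by blast
    have "(\<lambda>\<pi>. mdot ones_mat \<pi>) ` (sched :: (real^'n^'n) set) = {real CARD('n)}"
      using val p0 by (auto intro!: image_eqI[of _ _ \<pi>0])
    then show ?thesis by simp
  qed
  have "(1 / real CARD('n)) *\<^sub>R ones_mat = (\<Sum>k\<in>UNIV. (1 / real CARD('n)) *\<^sub>R (row_vec k :: real^'n^'n))"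
  proof (rule mat_eqI)
    fix i j
    have "(\<Sum>k\<in>UNIV. (1 / real CARD('n)) *\<^sub>R (row_vec k :: real^'n^'n)) $ i $ j
        = (\<Sum>k\<in>UNIV. (1 / real CARD('n)) * (row_vec k $ i $ j))"
      by (simp add: sum_component)
    also have "\<dots> = 1 / real CARD('n)" by (subst sum_single_support[where k=i]) (auto simp: row_vec_e)
    finally show "((1 / real CARD('n)) *\<^sub>R ones_mat) $ i $ j
        = (\<Sum>k\<in>UNIV. (1 / real CARD('n)) *\<^sub>R (row_vec k :: real^'n^'n)) $ i $ j"
      by (simp add: ones_mat_def)
  qed
  also have "\<dots> \<in> convex hull (Xi l)"
    by (rule convex_sum[OF finite convex_convex_hull]) (auto simp: Xi_eq[OF rows cols] intro: hull_inc)
  finally have "(1 / real CARD('n)) *\<^sub>R ones_mat \<in> convex hull Xi l" .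
  then show "(1 / Max ((\<lambda>\<pi>. mdot ones_mat \<pi>) ` (sched :: (real^'n^'n) set))) *\<^sub>R ones_mat \<in> convex hull Xi l"
    by (simp only: mx)
qed




definition phi :: "real \<Rightarrow> real \<Rightarrow> real" where
  "phi \<alpha> t = t powr (1 + \<alpha>) / (1 + \<alpha>)"

lemma Lyap_phi: "Lyap \<alpha> q = (\<Sum>i\<in>UNIV. \<Sum>j\<in>UNIV. phi \<alpha> (q$i$j))"
  by (simp add: Lyap_def phi_def)

definition rs :: "real^'n::finite^'n \<Rightarrow> 'n \<Rightarrow> real" where "rs q i = (\<Sum>j\<in>UNIV. q$i$j)"
definition cs :: "real^'n::finite^'n \<Rightarrow> 'n \<Rightarrow> real" where "cs q j = (\<Sum>i\<in>UNIV. q$i$j)"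

definition FS :: "real^'n::finite^'n \<Rightarrow> (real^'n^'n) set" where
  "FS q = {r. nonneg_mat r \<and> (\<forall>i. rs q i \<le> rs r i) \<and> (\<forall>j. cs q j \<le> cs r j)}"

lemma lift_feasible_FS:
  assumes "Xi l = range row_vec \<union> range col_vec" "\<And>i j. l$i$j \<noteq> 0"
  shows "lift_feasible l q = FS q"
proof -
  have e: "(\<forall>\<xi>\<in>range row_vec \<union> range col_vec. mdot \<xi> q \<le> mdot \<xi> r) \<longleftrightarrow> (\<forall>i. rs q i \<le> rs r i) \<and> (\<forall>j. cs q j \<le> cs r j)" for r
  proof
    assume h: "\<forall>\<xi>\<in>range row_vec \<union> range col_vec. mdot \<xi> q \<le> mdot \<xi> r"
    show "(\<forall>i. rs q i \<le> rs r i) \<and> (\<forall>j. cs q j \<le> cs r j)"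
    proof (intro conjI allI)
      fix i show "rs q i \<le> rs r i" using h[rule_format, of "row_vec i"] by (simp add: mdot_row rs_def)
    next
      fix j show "cs q j \<le> cs r j" using h[rule_format, of "col_vec j"] by (simp add: mdot_col cs_def)
    qed
  next
    assume h: "(\<forall>i. rs q i \<le> rs r i) \<and> (\<forall>j. cs q j \<le> cs r j)"
    show "\<forall>\<xi>\<in>range row_vec \<union> range col_vec. mdot \<xi> q \<le> mdot \<xi> r"
      using h by (auto simp: mdot_row mdot_col rs_def cs_def)
  qed
  show ?thesis unfolding lift_feasible_def FS_def assms(1) e using assms(2) by auto
qed

lemma phi_mvt:
  assumes "\<alpha> > 0" "0 \<le> a" "a < b"
  shows "\<exists>z. a < z \<and> z < b \<and> phi \<alpha> b - phi \<alpha> a = (b - a) * z powr \<alpha>"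
proof -
  have cont: "continuous_on {a..b} (phi \<alpha>)"
    unfolding phi_def using assms
    by (intro continuous_intros continuous_on_powr') auto
  have der: "DERIV (phi \<alpha>) z :> z powr \<alpha>" if "z > 0" for z
  proof -
    have "DERIV (\<lambda>z. z powr (1 + \<alpha>)) z :> (1 + \<alpha>) * z powr (1 + \<alpha> - 1)"
      using has_real_derivative_powr[OF that] .
    then have "DERIV (\<lambda>z. z powr (1 + \<alpha>) / (1 + \<alpha>)) z :> (1 + \<alpha>) * z powr (1 + \<alpha> - 1) / (1 + \<alpha>)"
      by (rule DERIV_cdivide)
    then show ?thesis using assms(1) unfolding phi_def by simp
  qed
  have dif: "phi \<alpha> differentiable (at x)" if "a < x" "x < b" for x
    using der[of x] that assms(2) real_differentiable_def by fastforce
  obtain l z where lz: "a < z" "z < b" "DERIV (phi \<alpha>) z :> l" "phi \<alpha> b - phi \<alpha> a = (b - a) * l"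
    using MVT[OF assms(3) cont dif] by blast
  have "l = z powr \<alpha>" using DERIV_unique[OF lz(3) der] lz(1) assms(2) by simp
  then show ?thesis using lz by blast
qed

lemma phi_tangent_strict:
  assumes a: "\<alpha> > 0" and x: "0 \<le> x" and y: "0 \<le> y" and ne: "x \<noteq> y"
  shows "phi \<alpha> y + y powr \<alpha> * (x - y) < phi \<alpha> x"
proof (cases "y < x")
  case True
  obtain z where z: "y < z" "z < x" "phi \<alpha> x - phi \<alpha> y = (x - y) * z powr \<alpha>"
    using phi_mvt[OF a y True] by blast
  have "y powr \<alpha> < z powr \<alpha>" using powr_less_mono2[OF a y z(1)] .
  then have "(x - y) * y powr \<alpha> < (x - y) * z powr \<alpha>" using True by simp
  then show ?thesis using z(3) by (simp add: algebra_simps)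
next
  case False
  then have lt: "x < y" using ne by simp
  obtain z where z: "x < z" "z < y" "phi \<alpha> y - phi \<alpha> x = (y - x) * z powr \<alpha>"
    using phi_mvt[OF a x lt] by blast
  have "z powr \<alpha> < y powr \<alpha>" using powr_less_mono2[OF a _ z(2)] z(1) x by simp
  then have "(y - x) * z powr \<alpha> < (y - x) * y powr \<alpha>" using lt by simp
  then show ?thesis using z(3) by (simp add: algebra_simps)
qed

lemma phi_tangent:
  assumes "\<alpha> > 0" "0 \<le> x" "0 \<le> y"
  shows "phi \<alpha> y + y powr \<alpha> * (x - y) \<le> phi \<alpha> x"
  using phi_tangent_strict[OF assms] by (cases "x = y") force+

definition lin :: "real \<Rightarrow> real^'n::finite^'n \<Rightarrow> real^'n^'n \<Rightarrow> real" where
  "lin \<alpha> q r = (\<Sum>i\<in>UNIV. \<Sum>j\<in>UNIV. q$i$j powr \<alpha> * (r$i$j - q$i$j))"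

lemma L_tangent:
  assumes a: "\<alpha> > 0" and r: "nonneg_mat r" and q: "nonneg_mat q"
  shows "Lyap \<alpha> q + lin \<alpha> q r \<le> Lyap \<alpha> r"
    and "r \<noteq> q \<Longrightarrow> Lyap \<alpha> q + lin \<alpha> q r < Lyap \<alpha> r"
proof -
  have eq: "Lyap \<alpha> q + lin \<alpha> q r = (\<Sum>i\<in>UNIV. \<Sum>j\<in>UNIV. phi \<alpha> (q$i$j) + q$i$j powr \<alpha> * (r$i$j - q$i$j))"
    by (simp add: Lyap_phi lin_def sum.distrib)
  have le: "\<And>i j. phi \<alpha> (q$i$j) + q$i$j powr \<alpha> * (r$i$j - q$i$j) \<le> phi \<alpha> (r$i$j)"
    using r q a by (intro phi_tangent) (auto simp: nonneg_mat_def)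
  show "Lyap \<alpha> q + lin \<alpha> q r \<le> Lyap \<alpha> r"
    unfolding eq by (simp only: Lyap_phi) (intro sum_mono le)
  assume "r \<noteq> q"
  then obtain i0 j0 where ne: "r$i0$j0 \<noteq> q$i0$j0" by (metis mat_eqI)
  have lt: "phi \<alpha> (q$i0$j0) + q$i0$j0 powr \<alpha> * (r$i0$j0 - q$i0$j0) < phi \<alpha> (r$i0$j0)"
    using r q a ne by (intro phi_tangent_strict) (auto simp: nonneg_mat_def)
  show "Lyap \<alpha> q + lin \<alpha> q r < Lyap \<alpha> r"
    unfolding eq
    unfolding Lyap_phi
  proof (rule sum_strict_mono_ex1)
    show "\<forall>i\<in>UNIV. (\<Sum>j\<in>UNIV. phi \<alpha> (q$i$j) + q$i$j powr \<alpha> * (r$i$j - q$i$j)) \<le> (\<Sum>j\<in>UNIV. phi \<alpha> (r$i$j))"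
      by (intro ballI sum_mono le)
    show "\<exists>i\<in>UNIV. (\<Sum>j\<in>UNIV. phi \<alpha> (q$i$j) + q$i$j powr \<alpha> * (r$i$j - q$i$j)) < (\<Sum>j\<in>UNIV. phi \<alpha> (r$i$j))"
    proof (rule bexI[of _ i0])
      show "(\<Sum>j\<in>UNIV. phi \<alpha> (q$i0$j) + q$i0$j powr \<alpha> * (r$i0$j - q$i0$j)) < (\<Sum>j\<in>UNIV. phi \<alpha> (r$i0$j))"
      proof (rule sum_strict_mono_ex1)
        show "\<forall>j\<in>UNIV. phi \<alpha> (q$i0$j) + q$i0$j powr \<alpha> * (r$i0$j - q$i0$j) \<le> phi \<alpha> (r$i0$j)"
          using le by blast
        show "\<exists>j\<in>UNIV. phi \<alpha> (q$i0$j) + q$i0$j powr \<alpha> * (r$i0$j - q$i0$j) < phi \<alpha> (r$i0$j)"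
          using lt by blast
      qed simp
    qed simp
  qed simp
qed

lemma phi_mono: "\<alpha> > 0 \<Longrightarrow> 0 \<le> x \<Longrightarrow> x \<le> y \<Longrightarrow> phi \<alpha> x \<le> phi \<alpha> y"
  unfolding phi_def by (intro divide_right_mono powr_mono2) auto

lemma norm_mat_le: "norm (x::real^'n::finite^'m::finite) \<le> (\<Sum>i\<in>UNIV. \<Sum>j\<in>UNIV. \<bar>x$i$j\<bar>)"
proof -
  have "norm x \<le> (\<Sum>i\<in>UNIV. norm (x$i))" unfolding norm_vec_def by (rule L2_set_le_sum) simp
  also have "\<dots> \<le> (\<Sum>i\<in>UNIV. \<Sum>j\<in>UNIV. \<bar>x$i$j\<bar>)" by (intro sum_mono norm_le_l1_cart)
  finally show ?thesis .
qed

lemma FS_min_exists: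
  assumes a: "\<alpha> > 0" and q: "nonneg_mat q"
  shows "\<exists>r\<in>FS q. \<forall>r'\<in>FS q. Lyap \<alpha> r \<le> Lyap \<alpha> r'"
proof -
  define Q where "Q = (\<Sum>i\<in>UNIV. \<Sum>j\<in>UNIV. q$i$j)"
  have qn: "\<And>i j. 0 \<le> q$i$j" using q by (simp add: nonneg_mat_def)
  have rsQ: "rs q i \<le> Q" for i
    unfolding rs_def Q_def by (rule member_le_sum) (auto intro: sum_nonneg qn)
  have csQ: "cs q j \<le> Q" for j
  proof -
    have "cs q j = (\<Sum>i\<in>UNIV. q$i$j)" by (simp add: cs_def)
    also have "\<dots> \<le> (\<Sum>i\<in>UNIV. \<Sum>j\<in>UNIV. q$i$j)" by (intro sum_mono member_le_sum) (auto intro: qn)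
    finally show ?thesis by (simp add: Q_def)
  qed
  have entQ: "q$i$j \<le> Q" for i j
    using rsQ[of i] member_le_sum[of j UNIV "\<lambda>j. q$i$j"] qn by (simp add: rs_def)
  define G where "G = FS q \<inter> {r. \<forall>i j. r$i$j \<le> Q}"
  have cl: "closed G"
  proof -
    have "G = {r. \<forall>i. \<forall>j. 0 \<le> r$i$j} \<inter> {r. \<forall>i. rs q i \<le> (\<Sum>j\<in>UNIV. r$i$j)}
        \<inter> {r. \<forall>j. cs q j \<le> (\<Sum>i\<in>UNIV. r$i$j)} \<inter> {r. \<forall>i. \<forall>j. r$i$j \<le> Q}"
      by (auto simp: G_def FS_def nonneg_mat_def rs_def cs_def)
    also have "closed \<dots>"
      by (intro closed_Int closed_Collect_all closed_Collect_le continuous_intros)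
    finally show ?thesis .
  qed
  have bd: "bounded G"
    unfolding bounded_iff
  proof (intro exI ballI)
    fix r assume r: "r \<in> G"
    have "norm r \<le> (\<Sum>i\<in>UNIV. \<Sum>j\<in>UNIV. \<bar>r$i$j\<bar>)" by (rule norm_mat_le)
    also have "\<dots> \<le> (\<Sum>i\<in>(UNIV::'a set). \<Sum>j\<in>(UNIV::'a set). Q)"
      using r by (intro sum_mono) (auto simp: G_def FS_def nonneg_mat_def)
    finally show "norm r \<le> (\<Sum>i\<in>(UNIV::'a set). \<Sum>j\<in>(UNIV::'a set). Q)" .
  qed
  have cp: "compact G" using cl bd by (simp add: compact_eq_bounded_closed)
  have qG: "q \<in> G" using q entQ by (auto simp: G_def FS_def)
  have ct: "continuous_on G (Lyap \<alpha>)"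
    unfolding Lyap_def
    by (intro continuous_intros continuous_on_powr') (use a in \<open>auto simp: G_def FS_def nonneg_mat_def\<close>)
  obtain r where r: "r \<in> G" "\<forall>y\<in>G. Lyap \<alpha> r \<le> Lyap \<alpha> y"
    using continuous_attains_inf[OF cp _ ct] qG by blast
  have "\<forall>r'\<in>FS q. Lyap \<alpha> r \<le> Lyap \<alpha> r'"
  proof
    fix r' assume r': "r' \<in> FS q"
    define c where "c = ((\<chi> i j. min (r'$i$j) Q) :: real^'a^'a)"
    have Qn: "0 \<le> Q" using entQ qn by (meson order_trans)
    have r'n: "\<And>i j. 0 \<le> r'$i$j" using r' by (auto simp: FS_def nonneg_mat_def)
    have cF: "c \<in> FS q"
      unfolding FS_def
    proof (intro CollectI conjI allI)
      show "nonneg_mat c" using Qn r'n by (simp add: c_def nonneg_mat_def)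
      fix i
      show "rs q i \<le> rs c i"
      proof (cases "\<exists>j. r'$i$j > Q")
        case True
        then obtain j where j: "r'$i$j > Q" by blast
        have "c$i$j \<le> rs c i" unfolding rs_def
          by (rule member_le_sum) (use Qn r'n in \<open>auto simp: c_def\<close>)
        then show ?thesis using j rsQ[of i] by (simp add: c_def)
      next
        case False
        then have "rs c i = rs r' i" by (simp add: rs_def c_def not_less)
        then show ?thesis using r' by (simp add: FS_def)
      qed
    next
      fix j
      show "cs q j \<le> cs c j"
      proof (cases "\<exists>i. r'$i$j > Q")
        case True
        then obtain i where i: "r'$i$j > Q" by blast
        have "c$i$j \<le> cs c j" unfolding cs_def
          by (rule member_le_sum[of i UNIV "\<lambda>i. c$i$j"]) (use Qn r'n in \<open>auto simp: c_def\<close>)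
        then show ?thesis using i csQ[of j] by (simp add: c_def)
      next
        case False
        then have "cs c j = cs r' j" by (simp add: cs_def c_def not_less)
        then show ?thesis using r' by (simp add: FS_def)
      qed
    qed
    have cG: "c \<in> G" using cF by (simp add: G_def c_def)
    have "Lyap \<alpha> c \<le> Lyap \<alpha> r'" unfolding Lyap_phi
      by (intro sum_mono phi_mono a) (use Qn r'n in \<open>auto simp: c_def\<close>)
    then show "Lyap \<alpha> r \<le> Lyap \<alpha> r'" using r(2) cG by fastforce
  qed
  moreover have "r \<in> FS q" using r(1) by (simp add: G_def)
  ultimately show ?thesis by blast
qed

lemma FS_convex: "r1 \<in> FS q \<Longrightarrow> r2 \<in> FS q \<Longrightarrow> (1/2) *\<^sub>R (r1 + r2) \<in> FS q"
  by (auto simp: FS_def nonneg_mat_def rs_def cs_def sum.distrib sum_divide_distrib[symmetric])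
    (metis add_mono mult_2_right)+

lemma lin_mid: "lin \<alpha> m r1 + lin \<alpha> m r2 = 0" if "m = (1/2) *\<^sub>R (r1 + r2)"
proof -
  have z: "\<And>i j. m$i$j powr \<alpha> * (r1$i$j - m$i$j) + m$i$j powr \<alpha> * (r2$i$j - m$i$j) = 0"
  proof -
    fix i j
    have "r1$i$j - m$i$j + (r2$i$j - m$i$j) = 0" using that by simp
    then show "m$i$j powr \<alpha> * (r1$i$j - m$i$j) + m$i$j powr \<alpha> * (r2$i$j - m$i$j) = 0"
      by (simp add: distrib_left[symmetric])
  qed
  show ?thesis unfolding lin_def sum.distrib[symmetric] z by simp
qed

lemma FS_min_unique:
  assumes a: "\<alpha> > 0" and r1: "r1 \<in> FS q" "\<forall>r'\<in>FS q. Lyap \<alpha> r1 \<le> Lyap \<alpha> r'"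
    and r2: "r2 \<in> FS q" "\<forall>r'\<in>FS q. Lyap \<alpha> r2 \<le> Lyap \<alpha> r'"
  shows "r1 = r2"
proof (rule ccontr)
  assume ne: "r1 \<noteq> r2"
  define m where "m = (1/2) *\<^sub>R (r1 + r2)"
  have mF: "m \<in> FS q" using FS_convex[OF r1(1) r2(1)] by (simp add: m_def)
  have nn: "nonneg_mat r1" "nonneg_mat r2" "nonneg_mat m" using r1 r2 mF by (auto simp: FS_def)
  have "r1 \<noteq> m"
  proof
    assume "r1 = m"
    then have h: "\<And>i j. r1$i$j = m$i$j" by simp
    have "r1 = r2"
    proof (rule mat_eqI)
      fix i j show "r1$i$j = r2$i$j" using h[of i j] by (simp add: m_def)
    qed
    then show False using ne by simp
  qed
  then have s1: "Lyap \<alpha> m + lin \<alpha> m r1 < Lyap \<alpha> r1" using L_tangent(2)[OF a nn(1) nn(3)] by simp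
  have s2: "Lyap \<alpha> m + lin \<alpha> m r2 \<le> Lyap \<alpha> r2" using L_tangent(1)[OF a nn(2) nn(3)] .
  have "Lyap \<alpha> r1 \<le> Lyap \<alpha> m" "Lyap \<alpha> r2 \<le> Lyap \<alpha> m" using r1(2) r2(2) mF by auto
  then show False using s1 s2 lin_mid[OF m_def, of \<alpha>] by linarith
qed

lemma lift_eq_min:
  assumes FSq: "lift_feasible l q = FS q" and a: "\<alpha> > 0"
    and r: "r \<in> FS q" "\<forall>r'\<in>FS q. Lyap \<alpha> r \<le> Lyap \<alpha> r'"
  shows "lift l \<alpha> q = r"
  unfolding lift_def FSq
proof (rule the_equality)
  show "r \<in> FS q \<and> (\<forall>r'\<in>FS q. Lyap \<alpha> r \<le> Lyap \<alpha> r')" using r by blast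
  fix r' assume "r' \<in> FS q \<and> (\<forall>r''\<in>FS q. Lyap \<alpha> r' \<le> Lyap \<alpha> r'')"
  then show "r' = r" using FS_min_unique[OF a] r by blast
qed

lemma inv_imp_min:
  assumes FSq: "lift_feasible l q = FS q" and a: "\<alpha> > 0" and inv: "q \<in> invariant_states l \<alpha>"
  shows "\<forall>r\<in>FS q. Lyap \<alpha> q \<le> Lyap \<alpha> r"
proof -
  have q: "nonneg_mat q" "lift l \<alpha> q = q" using inv by (auto simp: invariant_states_def)
  obtain r where r: "r \<in> FS q" "\<forall>r'\<in>FS q. Lyap \<alpha> r \<le> Lyap \<alpha> r'" using FS_min_exists[OF a q(1)] by blast
  have "lift l \<alpha> q = r" using lift_eq_min[OF FSq a r] .
  then show ?thesis using q(2) r(2) by simp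
qed

lemma suff_inv:
  assumes FSq: "lift_feasible l q = FS q" and a: "\<alpha> > 0" and q: "nonneg_mat q"
    and uv: "\<And>i. 0 \<le> u i" "\<And>j. 0 \<le> v j" "\<And>i j. q$i$j powr \<alpha> = u i + v j"
  shows "q \<in> invariant_states l \<alpha>"
proof -
  have qF: "q \<in> FS q" using q by (simp add: FS_def)
  have min: "\<forall>r\<in>FS q. Lyap \<alpha> q \<le> Lyap \<alpha> r"
  proof
    fix r assume r: "r \<in> FS q"
    have "lin \<alpha> q r = (\<Sum>i\<in>UNIV. \<Sum>j\<in>UNIV. u i * (r$i$j - q$i$j)) + (\<Sum>i\<in>UNIV. \<Sum>j\<in>UNIV. v j * (r$i$j - q$i$j))"
      unfolding lin_def uv(3) by (simp add: sum.distrib[symmetric] algebra_simps)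
    also have "\<dots> = (\<Sum>i\<in>UNIV. u i * (rs r i - rs q i)) + (\<Sum>j\<in>UNIV. v j * (cs r j - cs q j))"
    proof -
      have e1: "(\<Sum>i\<in>UNIV. \<Sum>j\<in>UNIV. u i * (r$i$j - q$i$j)) = (\<Sum>i\<in>UNIV. u i * (rs r i - rs q i))"
        by (simp add: rs_def right_diff_distrib sum_distrib_left sum_subtractf)
      have "(\<Sum>i\<in>UNIV. \<Sum>j\<in>UNIV. v j * (r$i$j - q$i$j)) = (\<Sum>j\<in>UNIV. \<Sum>i\<in>UNIV. v j * (r$i$j - q$i$j))"
        by (rule sum.swap)
      also have "\<dots> = (\<Sum>j\<in>UNIV. v j * (cs r j - cs q j))"
        by (simp add: cs_def right_diff_distrib sum_distrib_left sum_subtractf)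
      finally show ?thesis using e1 by simp
    qed
    also have "\<dots> \<ge> 0" using r uv by (intro add_nonneg_nonneg sum_nonneg mult_nonneg_nonneg) (auto simp: FS_def)
    finally have "lin \<alpha> q r \<ge> 0" .
    moreover have "Lyap \<alpha> q + lin \<alpha> q r \<le> Lyap \<alpha> r" using L_tangent(1)[OF a _ q] r by (simp add: FS_def)
    ultimately show "Lyap \<alpha> q \<le> Lyap \<alpha> r" by linarith
  qed
  show ?thesis using lift_eq_min[OF FSq a qF min] q by (simp add: invariant_states_def)
qed




lemma Wmap_Inl: "Wmap q $ Inl i = rs q i" by (simp add: Wmap_def mdot_row rs_def)
lemma Wmap_Inr: "Wmap q $ Inr j = cs q j" by (simp add: Wmap_def mdot_col cs_def)

lemma Wmap_eqI: assumes "\<And>i. rs q i = rs r i" "\<And>j. cs q j = cs r j" shows "Wmap q = Wmap r"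
proof (subst vec_eq_iff, intro allI)
  fix k :: "'a + 'a" show "Wmap q $ k = Wmap r $ k"
    by (cases k) (simp_all add: Wmap_Inl Wmap_Inr assms)
qed

lemma pert:
  assumes a: "\<alpha> > 0" and qS: "q \<in> S" and Snn: "\<forall>r\<in>S. nonneg_mat r"
    and min: "\<forall>r\<in>S. Lyap \<alpha> q \<le> Lyap \<alpha> r"
    and e0: "e0 > 0" and dir: "\<And>e. 0 < e \<Longrightarrow> e < e0 \<Longrightarrow> q + e *\<^sub>R d \<in> S"
  shows "0 \<le> (\<Sum>i\<in>UNIV. \<Sum>j\<in>UNIV. d$i$j * q$i$j powr \<alpha>)"
proof -
  have qn: "nonneg_mat q" using Snn qS by blast
  define g where "g = (\<lambda>e. \<Sum>i\<in>UNIV. \<Sum>j\<in>UNIV. d$i$j * (q$i$j + e * d$i$j) powr \<alpha>)"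
  have gpos: "g e \<ge> 0" if e: "0 < e" "e < e0" for e
  proof -
    define r where "r = q + e *\<^sub>R d"
    have rS: "r \<in> S" using dir[OF e] by (simp add: r_def)
    have rn: "nonneg_mat r" using Snn rS by blast
    have "Lyap \<alpha> r + lin \<alpha> r q \<le> Lyap \<alpha> q" using L_tangent(1)[OF a qn rn] .
    moreover have "Lyap \<alpha> q \<le> Lyap \<alpha> r" using min rS by blast
    moreover have "lin \<alpha> r q = - e * g e"
      unfolding lin_def g_def r_def by (simp add: sum_distrib_left sum_negf[symmetric] algebra_simps)
    ultimately have "e * g e \<ge> 0" by linarith
    then show ?thesis using e(1) by (simp add: zero_le_mult_iff)
  qed
  have ev: "eventually (\<lambda>e. 0 \<le> g e) (at_right 0)"
    unfolding eventually_at_right_field using e0 gpos by blast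
  have evnn: "eventually (\<lambda>e. q$i$j + e * d$i$j \<ge> 0) (at_right 0)" for i j
  proof -
    have "\<And>e. 0 < e \<Longrightarrow> e < e0 \<Longrightarrow> q$i$j + e * d$i$j \<ge> 0"
      using dir Snn by (fastforce simp: nonneg_mat_def)
    then show ?thesis unfolding eventually_at_right_field using e0 by blast
  qed
  have lim: "(g \<longlongrightarrow> (\<Sum>i\<in>UNIV. \<Sum>j\<in>UNIV. d$i$j * q$i$j powr \<alpha>)) (at_right 0)"
    unfolding g_def
  proof (intro tendsto_sum tendsto_mult tendsto_const)
    fix i j
    have "((\<lambda>e. (q$i$j + e * d$i$j) powr \<alpha>) \<longlongrightarrow> (q$i$j + 0 * d$i$j) powr \<alpha>) (at_right 0)"
      by (intro tendsto_powr' tendsto_intros) (use a evnn in auto)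
    then show "((\<lambda>e. (q$i$j + e * d$i$j) powr \<alpha>) \<longlongrightarrow> q$i$j powr \<alpha>) (at_right 0)" by simp
  qed
  show ?thesis using tendsto_lowerbound[OF lim ev] by simp
qed

definition E1 :: "'n::finite \<Rightarrow> 'n \<Rightarrow> real^'n^'n" where
  "E1 a b = (\<chi> x y. if x = a \<and> y = b then 1 else 0)"

definition cyc :: "'n::finite \<Rightarrow> 'n \<Rightarrow> 'n \<Rightarrow> 'n \<Rightarrow> real^'n^'n" where
  "cyc i j l k = E1 i j + E1 l k - E1 i k - E1 l j"

lemma sum_E1: "(\<Sum>x\<in>UNIV. \<Sum>y\<in>UNIV. (E1 a b)$x$y * f x y) = f a b"
proof -
  have "(\<Sum>x\<in>UNIV. \<Sum>y\<in>UNIV. (E1 a b)$x$y * f x y) = (\<Sum>y\<in>UNIV. (E1 a b)$a$y * f a y)"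
    by (rule sum_single_support) (simp add: E1_def)
  also have "\<dots> = (E1 a b)$a$b * f a b"
    by (rule sum_single_support) (simp add: E1_def)
  finally show ?thesis by (simp add: E1_def)
qed

lemma sum_cyc: "(\<Sum>x\<in>UNIV. \<Sum>y\<in>UNIV. (cyc i j l k)$x$y * f x y) = f i j + f l k - f i k - f l j"
proof -
  have "(\<Sum>x\<in>UNIV. \<Sum>y\<in>UNIV. (cyc i j l k)$x$y * f x y) =
     (\<Sum>x\<in>UNIV. \<Sum>y\<in>UNIV. (E1 i j)$x$y * f x y) + (\<Sum>x\<in>UNIV. \<Sum>y\<in>UNIV. (E1 l k)$x$y * f x y)
     - (\<Sum>x\<in>UNIV. \<Sum>y\<in>UNIV. (E1 i k)$x$y * f x y) - (\<Sum>x\<in>UNIV. \<Sum>y\<in>UNIV. (E1 l j)$x$y * f x y)"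
    by (simp add: cyc_def sum.distrib sum_subtractf algebra_simps)
  then show ?thesis by (simp add: sum_E1)
qed

lemma rs_E1: "rs (E1 a b) x = (if x = a then 1 else 0)"
  unfolding rs_def E1_def by (cases "x = a") simp_all

lemma cs_E1: "cs (E1 a b) y = (if y = b then 1 else 0)"
  unfolding cs_def E1_def by (cases "y = b") simp_all

lemma rs_lin: "rs (q + e *\<^sub>R d) x = rs q x + e * rs d x"
  by (simp add: rs_def sum.distrib sum_distrib_left)
lemma cs_lin: "cs (q + e *\<^sub>R d) x = cs q x + e * cs d x"
  by (simp add: cs_def sum.distrib sum_distrib_left)

lemma rs_cyc: "rs (cyc i j l k) x = 0"
  by (simp add: cyc_def rs_def sum.distrib sum_subtractf rs_E1[unfolded rs_def])
lemma cs_cyc: "cs (cyc i j l k) x = 0"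
  by (simp add: cyc_def cs_def sum.distrib sum_subtractf cs_E1[unfolded cs_def])

lemma cyc_nonneg:
  assumes q: "nonneg_mat q" and il: "i \<noteq> l" and e: "0 \<le> e" "e \<le> q$i$k" "e \<le> q$l$j"
  shows "nonneg_mat (q + e *\<^sub>R cyc i j l k)"
  unfolding nonneg_mat_def
proof (intro allI)
  fix x y
  have qx: "0 \<le> q$x$y" using q by (simp add: nonneg_mat_def)
  show "0 \<le> (q + e *\<^sub>R cyc i j l k)$x$y"
    using qx e il by (auto simp: cyc_def E1_def)
qed




lemma Wmap_eq_iff: "Wmap q = w \<longleftrightarrow> (\<forall>i. rs q i = w$Inl i) \<and> (\<forall>j. cs q j = w$Inr j)"
proof
  assume "Wmap q = w" then show "(\<forall>i. rs q i = w$Inl i) \<and> (\<forall>j. cs q j = w$Inr j)"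
    by (auto simp: Wmap_Inl[symmetric] Wmap_Inr[symmetric])
next
  assume h: "(\<forall>i. rs q i = w$Inl i) \<and> (\<forall>j. cs q j = w$Inr j)"
  show "Wmap q = w"
  proof (subst vec_eq_iff, intro allI)
    fix k :: "'a + 'a" show "Wmap q $ k = w $ k"
      using h by (cases k) (simp_all add: Wmap_Inl Wmap_Inr)
  qed
qed

lemma exists_big: "\<exists>k. (\<Sum>y\<in>UNIV. f y) \<le> real CARD('n::finite) * f (k::'n)"
proof -
  have "Max (range f) \<in> range f" by (rule Max_in) auto
  then obtain k where k: "f k = Max (range f)" by (metis rangeE)
  have "(\<Sum>y\<in>UNIV. f y) \<le> of_nat (card (UNIV::'n set)) * f k"
    by (rule sum_bounded_above) (simp add: k)
  then show ?thesis by blast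
qed

lemma small_alpha:
  fixes K :: real
  assumes K: "K > 0" and a: "0 < \<alpha>" "\<alpha> < ln 2 / ln (K + 1)"
  shows "K powr \<alpha> < 2"
proof -
  have lp: "ln (K + 1) > 0" using K by simp
  have "\<alpha> * ln (K + 1) < ln 2" using a(2) lp by (simp add: pos_less_divide_eq)
  then have "exp (\<alpha> * ln (K + 1)) < exp (ln 2)" by (rule exp_less_mono)
  then have "(K + 1) powr \<alpha> < 2" using K by (simp add: powr_def)
  moreover have "K powr \<alpha> \<le> (K + 1) powr \<alpha>" using K a(1) by (intro powr_mono2) auto
  ultimately show ?thesis by linarith
qed

lemma part_i:
  fixes l :: "real^'n::finite^'n"
  assumes FSall: "\<And>q. lift_feasible l q = FS q"
    and w: "w \<in> rel_interior (Wmap ` {q. nonneg_mat q})"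
  shows "\<exists>\<alpha>0>0. \<forall>\<alpha>. 0 < \<alpha> \<and> \<alpha> < \<alpha>0 \<longrightarrow> w \<in> Wmap ` invariant_states l \<alpha>"
proof -
  define S where "S = Wmap ` {q :: real^'n^'n. nonneg_mat q}"
  have wS: "w \<in> S" using w rel_interior_subset unfolding S_def by blast
  then obtain q0 :: "real^'n^'n" where q0: "nonneg_mat q0" "w = Wmap q0" unfolding S_def by blast
  have compnn: "\<And>z k. z \<in> S \<Longrightarrow> 0 \<le> z$k"
  proof -
    fix z and k :: "'n + 'n" assume "z \<in> S"
    then obtain q :: "real^'n^'n" where q: "nonneg_mat q" "z = Wmap q" unfolding S_def by blast
    show "0 \<le> z$k" using q by (cases k) (auto simp: Wmap_Inl Wmap_Inr rs_def cs_def nonneg_mat_def intro!: sum_nonneg)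
  qed
  obtain e where e: "e > 0" "cball w e \<inter> affine hull S \<subseteq> S"
    using w unfolding S_def[symmetric] mem_rel_interior_cball by blast
  define one where "one = Wmap (ones_mat :: real^'n^'n)"
  have oneS: "one \<in> S" unfolding S_def one_def by (intro imageI) (simp add: ones_mat_def nonneg_mat_def)
  have onek: "one$k = real CARD('n)" for k
    by (cases k) (simp_all add: one_def Wmap_Inl Wmap_Inr rs_def cs_def ones_mat_def)
  have wpos: "w$k > 0" for k
  proof (rule ccontr)
    assume "\<not> w$k > 0"
    then have wk: "w$k = 0" using compnn[OF wS, of k] by simp
    define t where "t = e / (norm (one - w) + 1)"
    have tpos: "t > 0" using e(1) unfolding t_def by (intro divide_pos_pos) (simp_all add: add_nonneg_pos)
    have tn: "t * norm (one - w) \<le> e"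
    proof -
      have "t * norm (one - w) \<le> t * (norm (one - w) + 1)" using tpos by simp
      also have "\<dots> = e"
      proof -
        have "norm (one - w) + 1 > 0" by (smt (verit) norm_ge_zero)
        then show ?thesis unfolding t_def by simp
      qed
      finally show ?thesis .
    qed
    define z where "z = (1 + t) *\<^sub>R w + (- t) *\<^sub>R one"
    have "z \<in> affine hull S"
      unfolding z_def by (rule mem_affine[OF affine_affine_hull]) (auto intro: hull_inc wS oneS)
    moreover have "z \<in> cball w e"
    proof -
      have "w - z = t *\<^sub>R (one - w)" by (simp add: z_def algebra_simps)
      then have "dist w z = t * norm (one - w)" using tpos by (simp add: dist_norm)
      then show ?thesis using tn by simp
    qed
    ultimately have "z \<in> S" using e(2) by blast
    then have "0 \<le> z$k" by (rule compnn)
    moreover have "z$k = - t * real CARD('n)" using wk onek[of k] by (simp add: z_def)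
    moreover have "t * real CARD('n) > 0" using tpos by simp
    ultimately show False by linarith
  qed
  define m where "m = Min (range (\<lambda>k. w$k))"
  have mle: "m \<le> w$k" for k unfolding m_def by simp
  have mpos: "m > 0"
  proof -
    have "m \<in> range (\<lambda>k. w$k)" unfolding m_def by (rule Min_in) auto
    then show ?thesis using wpos by auto
  qed
  define Tot where "Tot = (\<Sum>i\<in>UNIV. w$Inl i)"
  have aTot: "w$Inl i \<le> Tot" for i
    unfolding Tot_def by (rule member_le_sum) (use wpos in \<open>auto intro: less_imp_le\<close>)
  define M where "M = real CARD('n)"
  have M1: "M \<ge> 1" by (simp add: M_def)
  define K where "K = Tot * M / m"
  have Tpos: "Tot > 0" using aTot[of undefined] wpos[of "Inl undefined"] by linarith
  have K0: "K > 0" using Tpos M1 mpos by (simp add: K_def)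
  define \<alpha>0 where "\<alpha>0 = ln 2 / ln (K + 1)"
  have a0pos: "\<alpha>0 > 0" using K0 by (simp add: \<alpha>0_def)
  have "\<forall>\<alpha>. 0 < \<alpha> \<and> \<alpha> < \<alpha>0 \<longrightarrow> w \<in> Wmap ` invariant_states l \<alpha>"
  proof (intro allI impI)
    fix \<alpha> :: real assume "0 < \<alpha> \<and> \<alpha> < \<alpha>0"
    then have a: "0 < \<alpha>" "\<alpha> < \<alpha>0" by auto
    have key: "Tot powr \<alpha> < 2 * (m / M) powr \<alpha>"
    proof -
      have "K powr \<alpha> < 2" using small_alpha[OF K0 a(1)] a(2) by (simp add: \<alpha>0_def)
      moreover have "Tot = K * (m / M)" using mpos M1 by (simp add: K_def)
      then have "Tot powr \<alpha> = K powr \<alpha> * (m / M) powr \<alpha>" by (simp only: powr_mult)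
      moreover have "(m / M) powr \<alpha> > 0" using mpos M1 by simp
      ultimately show ?thesis by simp
    qed
    define T where "T = {q :: real^'n^'n. nonneg_mat q \<and> Wmap q = w}"
    have q0T: "q0 \<in> T" using q0 by (simp add: T_def)
    have Tnn: "\<forall>r\<in>T. nonneg_mat r" by (simp add: T_def)
    have entT: "\<And>q i j. q \<in> T \<Longrightarrow> q$i$j \<le> Tot"
    proof -
      fix q :: "real^'n^'n" and i j assume qT: "q \<in> T"
      have "q$i$j \<le> rs q i" unfolding rs_def
        by (rule member_le_sum) (use qT in \<open>auto simp: T_def nonneg_mat_def\<close>)
      also have "rs q i = w$Inl i" using qT by (simp add: T_def Wmap_eq_iff)
      finally show "q$i$j \<le> Tot" using aTot[of i] by linarith
    qed
    have cpT: "compact T"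
    proof -
      have "T = {r. \<forall>i. \<forall>j. 0 \<le> r$i$j} \<inter> {r. \<forall>i. (\<Sum>j\<in>UNIV. r$i$j) = w$Inl i} \<inter> {r. \<forall>j. (\<Sum>i\<in>UNIV. r$i$j) = w$Inr j}"
        by (auto simp: T_def Wmap_eq_iff nonneg_mat_def rs_def cs_def)
      also have "closed \<dots>"
        by (intro closed_Int closed_Collect_all closed_Collect_le closed_Collect_eq continuous_intros)
      finally have cl: "closed T" .
      have "bounded T"
        unfolding bounded_iff
      proof (intro exI ballI)
        fix r assume r: "r \<in> T"
        have "norm r \<le> (\<Sum>i\<in>UNIV. \<Sum>j\<in>UNIV. \<bar>r$i$j\<bar>)" by (rule norm_mat_le)
        also have "\<dots> \<le> (\<Sum>i\<in>(UNIV::'n set). \<Sum>j\<in>(UNIV::'n set). Tot)"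
          using r entT by (intro sum_mono) (auto simp: T_def nonneg_mat_def)
        finally show "norm r \<le> (\<Sum>i\<in>(UNIV::'n set). \<Sum>j\<in>(UNIV::'n set). Tot)" .
      qed
      then show ?thesis using cl by (simp add: compact_eq_bounded_closed)
    qed
    have ct: "continuous_on T (Lyap \<alpha>)"
      unfolding Lyap_def
      by (intro continuous_intros continuous_on_powr') (use a in \<open>auto simp: T_def nonneg_mat_def\<close>)
    obtain q where qT: "q \<in> T" and qmin: "\<forall>r\<in>T. Lyap \<alpha> q \<le> Lyap \<alpha> r"
      using continuous_attains_inf[OF cpT _ ct] q0T by blast
    have qn: "nonneg_mat q" and Wq: "Wmap q = w" using qT by (auto simp: T_def)
    have qe: "\<And>i j. 0 \<le> q$i$j" using qn by (simp add: nonneg_mat_def)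
    have cyc_ineq: "q$i$j powr \<alpha> + q$l$k powr \<alpha> - q$i$k powr \<alpha> - q$l$j powr \<alpha> \<ge> 0"
      if il: "i \<noteq> l" and p: "q$i$k > 0" "q$l$j > 0" for i j l k
    proof -
      define e0 where "e0 = min (q$i$k) (q$l$j)"
      have e0p: "e0 > 0" using p by (simp add: e0_def)
      have dir: "q + e *\<^sub>R cyc i j l k \<in> T" if "0 < e" "e < e0" for e
      proof -
        have "nonneg_mat (q + e *\<^sub>R cyc i j l k)"
          using that by (intro cyc_nonneg[OF qn il]) (auto simp: e0_def)
        moreover have "Wmap (q + e *\<^sub>R cyc i j l k) = w"
          using Wq by (simp add: Wmap_eq_iff rs_lin cs_lin rs_cyc cs_cyc)
        ultimately show ?thesis by (simp add: T_def)
      qed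
      have "0 \<le> (\<Sum>x\<in>UNIV. \<Sum>y\<in>UNIV. (cyc i j l k)$x$y * q$x$y powr \<alpha>)"
        using pert[OF a(1) qT Tnn qmin e0p dir] by blast
      then show ?thesis by (simp add: sum_cyc)
    qed
    have rowbig: "\<exists>k. m / M \<le> q$i$k" for i
    proof -
      obtain k where k: "(\<Sum>y\<in>UNIV. q$i$y) \<le> M * q$i$k" using exists_big unfolding M_def by blast
      have "(\<Sum>y\<in>UNIV. q$i$y) = w$Inl i" using Wq by (simp add: Wmap_eq_iff rs_def)
      then have "m \<le> M * q$i$k" using k mle[of "Inl i"] by linarith
      then show ?thesis using M1 by (auto simp: pos_divide_le_eq mult.commute)
    qed
    have colbig: "\<exists>l. m / M \<le> q$l$j" for j
    proof -
      obtain l where l: "(\<Sum>y\<in>UNIV. q$y$j) \<le> M * q$l$j" using exists_big unfolding M_def by blast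
      have "(\<Sum>y\<in>UNIV. q$y$j) = w$Inr j" using Wq by (simp add: Wmap_eq_iff cs_def)
      then have "m \<le> M * q$l$j" using l mle[of "Inr j"] by linarith
      then show ?thesis using M1 by (auto simp: pos_divide_le_eq mult.commute)
    qed
    have mMpos: "m / M > 0" using mpos M1 by simp
    have full: "q$i$j > 0" for i j
    proof (rule ccontr)
      assume "\<not> q$i$j > 0"
      then have z: "q$i$j = 0" using qe[of i j] by simp
      obtain k where k: "m / M \<le> q$i$k" using rowbig by blast
      obtain l where l: "m / M \<le> q$l$j" using colbig by blast
      have pk: "q$i$k > 0" "q$l$j > 0" using k l mMpos by linarith+
      have il: "i \<noteq> l" using z pk(2) by auto
      have ci: "q$i$j powr \<alpha> + q$l$k powr \<alpha> - q$i$k powr \<alpha> - q$l$j powr \<alpha> \<ge> 0"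
        using cyc_ineq[OF il pk] .
      have p1: "(m / M) powr \<alpha> \<le> q$i$k powr \<alpha>" using k mMpos a(1) by (intro powr_mono2) auto
      have p2: "(m / M) powr \<alpha> \<le> q$l$j powr \<alpha>" using l mMpos a(1) by (intro powr_mono2) auto
      have "q$l$k \<le> Tot" using entT[OF qT] .
      then have p3: "q$l$k powr \<alpha> \<le> Tot powr \<alpha>" using qe a(1) by (intro powr_mono2) auto
      show False using ci p1 p2 p3 key z by simp
    qed
    have eq_all: "q$i$j powr \<alpha> + q$l$k powr \<alpha> = q$i$k powr \<alpha> + q$l$j powr \<alpha>" for i j l k
    proof (cases "i = l")
      case True then show ?thesis by simp
    next
      case False
      have "q$i$j powr \<alpha> + q$l$k powr \<alpha> - q$i$k powr \<alpha> - q$l$j powr \<alpha> \<ge> 0"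
        using cyc_ineq[OF False full full] .
      moreover have "q$i$k powr \<alpha> + q$l$j powr \<alpha> - q$i$j powr \<alpha> - q$l$k powr \<alpha> \<ge> 0"
        using cyc_ineq[OF False full full, of k j] .
      ultimately show ?thesis by linarith
    qed
    define o0 where "o0 = (undefined :: 'n)"
    define u where "u = (\<lambda>i. q$i$o0 powr \<alpha> - q$o0$o0 powr \<alpha>)"
    define v where "v = (\<lambda>j. q$o0$j powr \<alpha>)"
    have uv: "q$i$j powr \<alpha> = u i + v j" for i j
      using eq_all[of i j o0 o0] by (simp add: u_def v_def)
    define c where "c = Min (range u)"
    have cle: "c \<le> u i" for i unfolding c_def by simp
    obtain i0 where i0: "u i0 = c"
    proof -
      have "c \<in> range u" unfolding c_def by (rule Min_in) auto
      then show ?thesis using that by auto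
    qed
    have u'nn: "0 \<le> u i - c" for i using cle[of i] by simp
    have v'nn: "0 \<le> v j + c" for j
    proof -
      have "v j + c = q$i0$j powr \<alpha>" using uv[of i0 j] i0 by simp
      then show ?thesis by simp
    qed
    have uv': "q$i$j powr \<alpha> = (u i - c) + (v j + c)" for i j using uv[of i j] by simp
    have "q \<in> invariant_states l \<alpha>"
      by (rule suff_inv[OF FSall a(1) qn, of "\<lambda>i. u i - c" "\<lambda>j. v j + c"]) (use u'nn v'nn uv' in auto)
    then show "w \<in> Wmap ` invariant_states l \<alpha>" using Wq by blast
  qed
  then show ?thesis using a0pos by blast
qed




definition path3 :: "'n::finite \<Rightarrow> 'n \<Rightarrow> 'n \<Rightarrow> 'n \<Rightarrow> real^'n^'n" where
  "path3 i j l k = E1 l j + E1 i k - E1 l k"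

lemma sum_path3: "(\<Sum>x\<in>UNIV. \<Sum>y\<in>UNIV. (path3 i j l k)$x$y * f x y) = f l j + f i k - f l k"
proof -
  have "(\<Sum>x\<in>UNIV. \<Sum>y\<in>UNIV. (path3 i j l k)$x$y * f x y) =
     (\<Sum>x\<in>UNIV. \<Sum>y\<in>UNIV. (E1 l j)$x$y * f x y) + (\<Sum>x\<in>UNIV. \<Sum>y\<in>UNIV. (E1 i k)$x$y * f x y)
     - (\<Sum>x\<in>UNIV. \<Sum>y\<in>UNIV. (E1 l k)$x$y * f x y)"
    by (simp add: path3_def sum.distrib sum_subtractf algebra_simps)
  then show ?thesis by (simp add: sum_E1)
qed

lemma rs_path3: "rs (path3 i j l k) x = (if x = i then 1 else 0)"
proof -
  have "rs (path3 i j l k) x = rs (E1 l j) x + rs (E1 i k) x - rs (E1 l k) x"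
    by (simp add: path3_def rs_def sum.distrib sum_subtractf)
  then show ?thesis by (simp add: rs_E1)
qed

lemma cs_path3: "cs (path3 i j l k) y = (if y = j then 1 else 0)"
proof -
  have "cs (path3 i j l k) y = cs (E1 l j) y + cs (E1 i k) y - cs (E1 l k) y"
    by (simp add: path3_def cs_def sum.distrib sum_subtractf)
  then show ?thesis by (simp add: cs_E1)
qed

lemma path3_nonneg:
  assumes q: "nonneg_mat q" and e: "0 \<le> e" "e \<le> q$l$k"
  shows "nonneg_mat (q + e *\<^sub>R path3 i j l k)"
  unfolding nonneg_mat_def
proof (intro allI)
  fix x y
  have qx: "0 \<le> q$x$y" using q by (simp add: nonneg_mat_def)
  show "0 \<le> (q + e *\<^sub>R path3 i j l k)$x$y"
    using qx e by (auto simp: path3_def E1_def)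
qed

lemma nec_cyc:
  assumes FSq: "lift_feasible l0 q = FS q" and b: "\<beta> > 0" and inv: "q \<in> invariant_states l0 \<beta>"
    and il: "i \<noteq> l" and p: "q$i$k > 0" "q$l$j > 0"
  shows "q$i$j powr \<beta> + q$l$k powr \<beta> - q$i$k powr \<beta> - q$l$j powr \<beta> \<ge> 0"
proof -
  have qn: "nonneg_mat q" using inv by (simp add: invariant_states_def)
  have min: "\<forall>r\<in>FS q. Lyap \<beta> q \<le> Lyap \<beta> r" using inv_imp_min[OF FSq b inv] .
  have qF: "q \<in> FS q" using qn by (simp add: FS_def)
  have Fnn: "\<forall>r\<in>FS q. nonneg_mat r" by (simp add: FS_def)
  define e0 where "e0 = min (q$i$k) (q$l$j)"
  have e0p: "e0 > 0" using p by (simp add: e0_def)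
  have dir: "q + e *\<^sub>R cyc i j l k \<in> FS q" if "0 < e" "e < e0" for e
  proof -
    have "nonneg_mat (q + e *\<^sub>R cyc i j l k)"
      using that by (intro cyc_nonneg[OF qn il]) (auto simp: e0_def)
    then show ?thesis by (simp add: FS_def rs_lin cs_lin rs_cyc cs_cyc)
  qed
  have "0 \<le> (\<Sum>x\<in>UNIV. \<Sum>y\<in>UNIV. (cyc i j l k)$x$y * q$x$y powr \<beta>)"
    using pert[OF b qF Fnn min e0p dir] by blast
  then show ?thesis by (simp add: sum_cyc)
qed

lemma nec_path:
  assumes FSq: "lift_feasible l0 q = FS q" and b: "\<beta> > 0" and inv: "q \<in> invariant_states l0 \<beta>"
    and p: "q$l$k > 0"
  shows "q$l$j powr \<beta> + q$i$k powr \<beta> - q$l$k powr \<beta> \<ge> 0"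
proof -
  have qn: "nonneg_mat q" using inv by (simp add: invariant_states_def)
  have min: "\<forall>r\<in>FS q. Lyap \<beta> q \<le> Lyap \<beta> r" using inv_imp_min[OF FSq b inv] .
  have qF: "q \<in> FS q" using qn by (simp add: FS_def)
  have Fnn: "\<forall>r\<in>FS q. nonneg_mat r" by (simp add: FS_def)
  have dir: "q + e *\<^sub>R path3 i j l k \<in> FS q" if "0 < e" "e < q$l$k" for e
  proof -
    have "nonneg_mat (q + e *\<^sub>R path3 i j l k)"
      using that by (intro path3_nonneg[OF qn]) auto
    then show ?thesis using that by (simp add: FS_def rs_lin cs_lin rs_path3 cs_path3)
  qed
  have "0 \<le> (\<Sum>x\<in>UNIV. \<Sum>y\<in>UNIV. (path3 i j l k)$x$y * q$x$y powr \<beta>)"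
    using pert[OF b qF Fnn min p dir] by blast
  then show ?thesis by (simp add: sum_path3)
qed

lemma eq_all_inv:
  fixes q :: "real^'n::finite^'n"
  assumes FSq: "lift_feasible l0 q = FS q" and a: "\<alpha> > 0" and qn: "nonneg_mat q"
    and eq_all: "\<And>i j l k. q$i$j powr \<alpha> + q$l$k powr \<alpha> = q$i$k powr \<alpha> + q$l$j powr \<alpha>"
  shows "q \<in> invariant_states l0 \<alpha>"
proof -
  define o0 where "o0 = (undefined :: 'n)"
  define u where "u = (\<lambda>i. q$i$o0 powr \<alpha> - q$o0$o0 powr \<alpha>)"
  define v where "v = (\<lambda>j. q$o0$j powr \<alpha>)"
  have uv: "q$i$j powr \<alpha> = u i + v j" for i j
    using eq_all[of i j o0 o0] by (simp add: u_def v_def)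
  define c where "c = Min (range u)"
  have cle: "c \<le> u i" for i unfolding c_def by simp
  obtain i0 where i0: "u i0 = c"
  proof -
    have "c \<in> range u" unfolding c_def by (rule Min_in) auto
    then show ?thesis using that by auto
  qed
  have u'nn: "0 \<le> u i - c" for i using cle[of i] by simp
  have v'nn: "0 \<le> v j + c" for j
  proof -
    have "v j + c = q$i0$j powr \<alpha>" using uv[of i0 j] i0 by simp
    then show ?thesis by simp
  qed
  have uv': "q$i$j powr \<alpha> = (u i - c) + (v j + c)" for i j using uv[of i j] by simp
  show ?thesis
    by (rule suff_inv[OF FSq a qn, of "\<lambda>i. u i - c" "\<lambda>j. v j + c"]) (use u'nn v'nn uv' in auto)
qed

lemma transfer:
  fixes s y z :: real
  assumes nn: "0 \<le> s" "0 \<le> y" "0 \<le> z" and ab: "0 < \<alpha>" "\<alpha> < \<beta>"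
    and h: "s powr \<beta> \<le> y powr \<beta> + z powr \<beta>"
  shows "s powr \<alpha> \<le> y powr \<alpha> + z powr \<alpha>"
proof -
  consider "s = 0" | "y \<ge> s" | "z \<ge> s" | "0 < s" "y < s" "z < s" using nn by linarith
  then show ?thesis
  proof cases
    case 1 then show ?thesis by simp
  next
    case 2
    then have "s powr \<alpha> \<le> y powr \<alpha>" using nn ab by (intro powr_mono2) auto
    then show ?thesis using powr_ge_zero[of z \<alpha>] by linarith
  next
    case 3
    then have "s powr \<alpha> \<le> z powr \<alpha>" using nn ab by (intro powr_mono2) auto
    then show ?thesis using powr_ge_zero[of y \<alpha>] by linarith
  next
    case 4
    have sp: "s powr \<beta> > 0" "s powr \<alpha> > 0" using 4 by auto
    have "1 \<le> y powr \<beta> / s powr \<beta> + z powr \<beta> / s powr \<beta>"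
      using h sp by (simp add: add_divide_distrib[symmetric] le_divide_eq)
    also have "y powr \<beta> / s powr \<beta> = (y / s) powr \<beta>" by (simp add: powr_divide)
    also have "z powr \<beta> / s powr \<beta> = (z / s) powr \<beta>" by (simp add: powr_divide)
    also have "(y / s) powr \<beta> \<le> (y / s) powr \<alpha>" using 4 nn ab by (intro powr_mono') auto
    also have "(z / s) powr \<beta> \<le> (z / s) powr \<alpha>" using 4 nn ab by (intro powr_mono') auto
    finally have "1 \<le> (y / s) powr \<alpha> + (z / s) powr \<alpha>" by simp
    also have "\<dots> = (y powr \<alpha> + z powr \<alpha>) / s powr \<alpha>" by (simp add: powr_divide add_divide_distrib)
    finally show ?thesis using sp by (simp add: le_divide_eq)
  qed
qed

definition Ff :: "real \<Rightarrow> real \<Rightarrow> real \<Rightarrow> real \<Rightarrow> real \<Rightarrow> real \<Rightarrow> real" where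
  "Ff \<gamma> x11 x22 x12 x21 t = (x11 + t) powr \<gamma> + (x22 + t) powr \<gamma> - (x12 - t) powr \<gamma> - (x21 - t) powr \<gamma>"

lemma low:
  fixes x11 x22 x12 x21 :: real
  assumes nn: "0 \<le> x11" "0 \<le> x22" "0 \<le> x12" "0 \<le> x21" and ab: "0 < \<alpha>" "\<alpha> < \<beta>"
    and H4: "x11 > 0 \<Longrightarrow> x22 > 0 \<Longrightarrow> x11 powr \<beta> + x22 powr \<beta> \<le> x12 powr \<beta> + x21 powr \<beta>"
    and H3a: "x22 > 0 \<Longrightarrow> x22 powr \<beta> \<le> x12 powr \<beta> + x21 powr \<beta>"
    and H3b: "x11 > 0 \<Longrightarrow> x11 powr \<beta> \<le> x12 powr \<beta> + x21 powr \<beta>"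
  shows "Ff \<alpha> x11 x22 x12 x21 (- min x11 x22) \<le> 0"
proof -
  define c where "c = min x11 x22"
  define p11 where "p11 = x11 - c"
  define p22 where "p22 = x22 - c"
  define p12 where "p12 = x12 + c"
  define p21 where "p21 = x21 + c"
  define s where "s = p11 + p22"
  have c0: "0 \<le> c" using nn by (simp add: c_def)
  have pn: "0 \<le> p11" "0 \<le> p22" "0 \<le> p12" "0 \<le> p21" using nn c0 by (auto simp: p11_def p22_def p12_def p21_def c_def)
  have one0: "p11 = 0 \<or> p22 = 0" by (auto simp: p11_def p22_def c_def min_def)
  have spow: "s powr \<gamma> = p11 powr \<gamma> + p22 powr \<gamma>" for \<gamma>
    using one0 by (auto simp: s_def)
  have claim: "s powr \<beta> \<le> p12 powr \<beta> + p21 powr \<beta>"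
  proof (cases "x11 > 0 \<and> x22 > 0")
    case True
    have m1: "p11 powr \<beta> \<le> x11 powr \<beta>" using pn c0 ab by (intro powr_mono2) (auto simp: p11_def)
    have m2: "p22 powr \<beta> \<le> x22 powr \<beta>" using pn c0 ab by (intro powr_mono2) (auto simp: p22_def)
    have m3: "x12 powr \<beta> \<le> p12 powr \<beta>" using nn c0 ab by (intro powr_mono2) (auto simp: p12_def)
    have m4: "x21 powr \<beta> \<le> p21 powr \<beta>" using nn c0 ab by (intro powr_mono2) (auto simp: p21_def)
    show ?thesis using H4 True m1 m2 m3 m4 spow[of \<beta>] by linarith
  next
    case False
    then have c00: "c = 0" using nn by (auto simp: c_def min_def)
    then have pe: "p11 = x11" "p22 = x22" "p12 = x12" "p21 = x21"
      by (simp_all add: p11_def p22_def p12_def p21_def)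
    show ?thesis
    proof (cases "x11 = 0")
      case True
      then have "s = x22" by (simp add: s_def pe)
      then show ?thesis using H3a pe nn by (cases "x22 = 0") auto
    next
      case False
      then have "x22 = 0" using \<open>\<not> (x11 > 0 \<and> x22 > 0)\<close> nn by auto
      then have "s = x11" by (simp add: s_def pe)
      then show ?thesis using H3b pe nn False by auto
    qed
  qed
  have "s powr \<alpha> \<le> p12 powr \<alpha> + p21 powr \<alpha>"
    by (rule transfer[OF _ pn(3,4) ab claim]) (use pn in \<open>simp add: s_def\<close>)
  then show ?thesis using spow[of \<alpha>]
    by (simp add: Ff_def c_def[symmetric] p11_def[symmetric] p22_def[symmetric] p12_def p21_def)
qed




lemma eq2_all:
  assumes "e1 \<noteq> e2" and U: "UNIV = {e1, e2}"
    and h: "f e1 e1 + f e2 e2 = f e1 e2 + (f e2 e1 :: real)"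
  shows "f i j + f l k = f i k + f l j"
proof -
  have d: "\<And>x. x = e1 \<or> x = e2" using U by auto
  show ?thesis using d[of i] d[of j] d[of l] d[of k]
    by (elim disjE) (use h in auto)
qed

lemma part_ii_sub:
  fixes l :: "real^'n::finite^'n" and e1 e2 :: 'n
  assumes FSall: "\<And>q. lift_feasible l q = FS q" and e12: "e1 \<noteq> e2" and U: "UNIV = {e1, e2}"
    and ab: "0 < \<alpha>" "\<alpha> < \<beta>" and inv: "q \<in> invariant_states l \<beta>"
  shows "Wmap q \<in> Wmap ` invariant_states l \<alpha>"
proof -
  have b: "\<beta> > 0" using ab by simp
  have qn: "nonneg_mat q" using inv by (simp add: invariant_states_def)
  define x11 where "x11 = q$e1$e1"
  define x22 where "x22 = q$e2$e2"
  define x12 where "x12 = q$e1$e2"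
  define x21 where "x21 = q$e2$e1"
  have nn: "0 \<le> x11" "0 \<le> x22" "0 \<le> x12" "0 \<le> x21" using qn
    by (auto simp: nonneg_mat_def x11_def x22_def x12_def x21_def)
  note NC = nec_cyc[OF FSall b inv] and NP = nec_path[OF FSall b inv]
  have lo: "Ff \<alpha> x11 x22 x12 x21 (- min x11 x22) \<le> 0"
  proof (rule low[OF nn ab])
    show "x11 powr \<beta> + x22 powr \<beta> \<le> x12 powr \<beta> + x21 powr \<beta>" if "x11 > 0" "x22 > 0"
      using NC[of e1 e2 e1 e2] e12 that unfolding x11_def x22_def x12_def x21_def by simp
    show "x22 powr \<beta> \<le> x12 powr \<beta> + x21 powr \<beta>" if "x22 > 0"
      using NP[of e2 e2 e1 e1] that unfolding x11_def x22_def x12_def x21_def by simp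
    show "x11 powr \<beta> \<le> x12 powr \<beta> + x21 powr \<beta>" if "x11 > 0"
      using NP[of e1 e1 e2 e2] that unfolding x11_def x22_def x12_def x21_def by simp
  qed
  have hi0: "Ff \<alpha> x12 x21 x11 x22 (- min x12 x21) \<le> 0"
  proof (rule low[OF nn(3,4,1,2) ab])
    show "x12 powr \<beta> + x21 powr \<beta> \<le> x11 powr \<beta> + x22 powr \<beta>" if "x12 > 0" "x21 > 0"
      using NC[of e1 e2 e2 e1] e12 that unfolding x11_def x22_def x12_def x21_def by simp
    show "x21 powr \<beta> \<le> x11 powr \<beta> + x22 powr \<beta>" if "x21 > 0"
      using NP[of e2 e1 e2 e1] that unfolding x11_def x22_def x12_def x21_def by simp
    show "x12 powr \<beta> \<le> x11 powr \<beta> + x22 powr \<beta>" if "x12 > 0"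
      using NP[of e1 e2 e1 e2] that unfolding x11_def x22_def x12_def x21_def by simp
  qed
  define c where "c = min x11 x22"
  define c' where "c' = min x12 x21"
  have hi: "0 \<le> Ff \<alpha> x11 x22 x12 x21 c'"
    using hi0 unfolding c'_def Ff_def by simp
  have c0: "0 \<le> c" "0 \<le> c'" using nn by (auto simp: c_def c'_def)
  have cont: "continuous_on {-c..c'} (Ff \<alpha> x11 x22 x12 x21)"
    unfolding Ff_def
    by (intro continuous_intros continuous_on_powr') (use ab nn in \<open>auto simp: c_def c'_def\<close>)
  obtain t where t: "-c \<le> t" "t \<le> c'" "Ff \<alpha> x11 x22 x12 x21 t = 0"
    using IVT'[of "Ff \<alpha> x11 x22 x12 x21" "-c" 0 c'] lo hi cont c0 unfolding c_def by auto
  define q' where "q' = q + t *\<^sub>R cyc e1 e1 e2 e2"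
  have qe: "q'$e1$e1 = x11 + t" "q'$e2$e2 = x22 + t" "q'$e1$e2 = x12 - t" "q'$e2$e1 = x21 - t"
    using e12 by (auto simp: q'_def cyc_def E1_def x11_def x22_def x12_def x21_def)
  have q'nn: "nonneg_mat q'"
    unfolding nonneg_mat_def
  proof (intro allI)
    fix i j
    have d: "\<And>x. x = e1 \<or> x = e2" using U by auto
    have "0 \<le> x11 + t" "0 \<le> x22 + t" "0 \<le> x12 - t" "0 \<le> x21 - t"
      using t nn by (auto simp: c_def c'_def)
    then show "0 \<le> q'$i$j" using d[of i] d[of j] qe by (elim disjE) auto
  qed
  have W: "Wmap q' = Wmap q"
    by (rule Wmap_eqI) (simp_all add: q'_def rs_lin cs_lin rs_cyc cs_cyc)
  have eq: "q'$e1$e1 powr \<alpha> + q'$e2$e2 powr \<alpha> = q'$e1$e2 powr \<alpha> + q'$e2$e1 powr \<alpha>"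
    using t(3) unfolding qe Ff_def by simp
  have "q' \<in> invariant_states l \<alpha>"
    by (rule eq_all_inv[OF FSall ab(1) q'nn]) (rule eq2_all[OF e12 U, of "\<lambda>i j. q'$i$j powr \<alpha>"], rule eq)
  then show ?thesis using W by (metis image_eqI)
qed

lemma part_ii_strict:
  fixes l :: "real^'n::finite^'n" and e1 e2 :: 'n
  assumes FSall: "\<And>q. lift_feasible l q = FS q" and e12: "e1 \<noteq> e2" and U: "UNIV = {e1, e2}"
    and ab: "0 < \<alpha>" "\<alpha> < \<beta>"
  shows "\<exists>w. w \<in> Wmap ` invariant_states l \<alpha> \<and> w \<notin> Wmap ` invariant_states l \<beta>"
proof -
  have b: "\<beta> > 0" using ab by simp
  define s where "s = (2::real) powr (1 / \<alpha>)"
  have spos: "s > 0" by (simp add: s_def)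
  have sa: "s powr \<alpha> = 2" using ab by (simp add: s_def powr_powr)
  define q :: "real^'n^'n" where "q = (\<chi> i j. if i = e1 then (if j = e1 then 0 else 1) else (if j = e1 then 1 else s))"
  have qe: "q$e1$e1 = 0" "q$e1$e2 = 1" "q$e2$e1 = 1" "q$e2$e2 = s" using e12 by (auto simp: q_def)
  have qn: "nonneg_mat q" using spos by (auto simp: q_def nonneg_mat_def)
  have eqq: "q$e1$e1 powr \<alpha> + q$e2$e2 powr \<alpha> = q$e1$e2 powr \<alpha> + q$e2$e1 powr \<alpha>"
    unfolding qe sa by simp
  have qinv: "q \<in> invariant_states l \<alpha>"
    by (rule eq_all_inv[OF FSall ab(1) qn], rule eq2_all[OF e12 U, of "\<lambda>i j. q$i$j powr \<alpha>"], rule eqq)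
  have "Wmap q \<notin> Wmap ` invariant_states l \<beta>"
  proof
    assume "Wmap q \<in> Wmap ` invariant_states l \<beta>"
    then obtain q' where q': "q' \<in> invariant_states l \<beta>" "Wmap q' = Wmap q" by auto
    have q'n: "\<And>i j. 0 \<le> q'$i$j" using q' by (auto simp: invariant_states_def nonneg_mat_def)
    have sU: "(\<Sum>x\<in>UNIV. f x) = f e1 + f e2" for f :: "'n \<Rightarrow> real"
      by (subst U) (simp add: e12)
    have r1: "q'$e1$e1 + q'$e1$e2 = 1"
      using arg_cong[OF q'(2), of "\<lambda>w. w $ Inl e1"] qe by (simp add: Wmap_Inl rs_def sU)
    have c1: "q'$e1$e1 + q'$e2$e1 = 1"
      using arg_cong[OF q'(2), of "\<lambda>w. w $ Inr e1"] qe by (simp add: Wmap_Inr cs_def sU)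
    have r2: "q'$e2$e1 + q'$e2$e2 = 1 + s"
      using arg_cong[OF q'(2), of "\<lambda>w. w $ Inl e2"] qe by (simp add: Wmap_Inl rs_def sU)
    have le12: "q'$e1$e2 \<le> 1" using r1 q'n[of e1 e1] by linarith
    have le21: "q'$e2$e1 \<le> 1" using c1 q'n[of e1 e1] by linarith
    have ge22: "s \<le> q'$e2$e2" using r2 le21 by linarith
    have "q'$e2$e1 powr \<beta> + q'$e1$e2 powr \<beta> - q'$e2$e2 powr \<beta> \<ge> 0"
      using nec_path[OF FSall b q'(1), of e2 e2 e1 e1] ge22 spos by simp
    moreover have "q'$e2$e1 powr \<beta> \<le> 1" using le21 q'n b powr_mono2[of \<beta> "q'$e2$e1" 1] by simp
    moreover have "q'$e1$e2 powr \<beta> \<le> 1" using le12 q'n b powr_mono2[of \<beta> "q'$e1$e2" 1] by simp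
    moreover have "s powr \<beta> \<le> q'$e2$e2 powr \<beta>" using ge22 spos b by (intro powr_mono2) auto
    moreover have "s powr \<beta> > 2"
    proof -
      have "s powr \<beta> = 2 powr (\<beta> / \<alpha>)" using ab by (simp add: s_def powr_powr)
      also have "\<dots> > 2 powr 1" using ab by (intro powr_less_mono) (auto simp: field_simps)
      finally show ?thesis by simp
    qed
    ultimately show False by linarith
  qed
  then show ?thesis using qinv by blast
qed

theorem theorem8p3:
  fixes l :: "real^'n::finite^'n"
  assumes pos: "\<And>i j. l$i$j > 0"
    and rows: "\<And>i. (\<Sum>j\<in>UNIV. l$i$j) = 1"
    and cols: "\<And>j. (\<Sum>i\<in>UNIV. l$i$j) = 1"
  shows "complete_loading l
    \<and> Xi l = range row_vec \<union> range col_vec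
    \<and> (\<forall>w\<in>rel_interior (Wmap ` {q. nonneg_mat q}).
          \<exists>\<alpha>0>0. \<forall>\<alpha>. 0 < \<alpha> \<and> \<alpha> < \<alpha>0 \<longrightarrow> w \<in> Wmap ` invariant_states l \<alpha>)
    \<and> (CARD('n) = 2 \<longrightarrow>
         (\<forall>\<alpha> \<beta>. 0 < \<alpha> \<and> \<alpha> < \<beta> \<longrightarrow>
            Wmap ` invariant_states l \<beta> \<subset> Wmap ` invariant_states l \<alpha>))"
proof (intro conjI ballI impI allI)
  show "complete_loading l" by (rule complete_loading_thm[OF pos rows cols])
  show Xi: "Xi l = range row_vec \<union> range col_vec" by (rule Xi_eq[OF rows cols])
  have FSall: "\<And>q. lift_feasible l q = FS q"
    using lift_feasible_FS[OF Xi] pos by (metis less_irrefl)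
  fix w assume "w \<in> rel_interior (Wmap ` {q :: real^'n^'n. nonneg_mat q})"
  then show "\<exists>\<alpha>0>0. \<forall>\<alpha>. 0 < \<alpha> \<and> \<alpha> < \<alpha>0 \<longrightarrow> w \<in> Wmap ` invariant_states l \<alpha>"
    by (rule part_i[OF FSall])
next
  fix \<alpha> \<beta> :: real
  assume c2: "CARD('n) = 2" and ab: "0 < \<alpha> \<and> \<alpha> < \<beta>"
  have Xi: "Xi l = range row_vec \<union> range col_vec" by (rule Xi_eq[OF rows cols])
  have FSall: "\<And>q. lift_feasible l q = FS q"
    using lift_feasible_FS[OF Xi] pos by (metis less_irrefl)
  obtain e1 e2 :: 'n where e: "UNIV = {e1, e2}" "e1 \<noteq> e2"
    using c2 card_2_iff[of "UNIV :: 'n set"] by auto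
  have sub: "Wmap ` invariant_states l \<beta> \<subseteq> Wmap ` invariant_states l \<alpha>"
    using part_ii_sub[OF FSall e(2) e(1)] ab by blast
  obtain w where "w \<in> Wmap ` invariant_states l \<alpha>" "w \<notin> Wmap ` invariant_states l \<beta>"
    using part_ii_strict[OF FSall e(2) e(1)] ab by blast
  then show "Wmap ` invariant_states l \<beta> \<subset> Wmap ` invariant_states l \<alpha>" using sub by blast
qed


end
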